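(* Let $G$ and $H$ be finite simple graphs without isolated vertices. Then: (i) there are no such graphs $G,H$ with $\gamma_{tR}(G\times H)\in\{1,2,3,5\}$; (ii) $\gamma_{tR}(G\times H)=4$ if and only if $G$ and $H$ are both isomorphic to $K_2$; (iii) $\gamma_{tR}(G\times H)=6$ if and only if ($G$ and $H$ each have at least two universal vertices and at least one of them has order at least three), or (one factor is $K_2$ and the other has order at least three and contains a universal vertex), or ($G$ and $H$ are both triangle centered); (iv) $\gamma_{tR}(G\times H)=7$ if and only if both $G$ and $H$ have a universal vertex, one of $G$ and $H$ has exactly one universal vertex and the other one is different from $K_2$, and at most one of $G$ and $H$ is triangle centered; (v) if at most one of $G$ and $H$ has a universal vertex, $\gamma_t(G)=\gamma_t(H)=2$, and $G$ and $H$ are not both triangle centered, then $\gamma_{tR}(G\times H)=8$.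
   Context: A total Roman dominating function on $G$ is a map $f:V(G)\to\{0,1,2\}$ such that every vertex with label 0 has a neighbor with label 2 and the subgraph induced by vertices with positive labels has no isolated vertices; $\gamma_{tR}(G)$ is the minimum of $\sum_v f(v)$ over such $f$. $\gamma_t(G)$ is the minimum size of a set $D$ such that every vertex of $G$ has a neighbor in $D$. A universal vertex of $G$ is a vertex adjacent to all other vertices. $G$ is triangle centered if it contains a triangle $xyz$ such that every vertex of $G$ is adjacent to at least two vertices of $\{x,y,z\}$. The direct product $G\times H$ has vertex set $V(G)\times V(H)$, with $(g,h)(g',h')$ an edge iff $gg'\in E(G)$ and $hh'\in E(H)$. *)

theory Defs
  imports Main
begin

definition simple_graph :: "'a set \<Rightarrow> ('a \<Rightarrow> 'a \<Rightarrow> bool) \<Rightarrow> bool" where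
  "simple_graph V E \<longleftrightarrow> finite V \<and> (\<forall>x y. E x y \<longrightarrow> x \<in> V \<and> y \<in> V)
     \<and> (\<forall>x y. E x y \<longrightarrow> E y x) \<and> (\<forall>x. \<not> E x x)"

definition no_isolated :: "'a set \<Rightarrow> ('a \<Rightarrow> 'a \<Rightarrow> bool) \<Rightarrow> bool" where
  "no_isolated V E \<longleftrightarrow> (\<forall>v\<in>V. \<exists>u\<in>V. E v u)"

definition dprod_edges :: "('a \<Rightarrow> 'a \<Rightarrow> bool) \<Rightarrow> ('b \<Rightarrow> 'b \<Rightarrow> bool)
    \<Rightarrow> ('a \<times> 'b) \<Rightarrow> ('a \<times> 'b) \<Rightarrow> bool" where
  "dprod_edges E1 E2 p q \<longleftrightarrow> E1 (fst p) (fst q) \<and> E2 (snd p) (snd q)"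

definition is_trdf :: "'a set \<Rightarrow> ('a \<Rightarrow> 'a \<Rightarrow> bool) \<Rightarrow> ('a \<Rightarrow> nat) \<Rightarrow> bool" where
  "is_trdf V E f \<longleftrightarrow> (\<forall>v\<in>V. f v \<le> 2)
     \<and> (\<forall>v\<in>V. f v = 0 \<longrightarrow> (\<exists>u\<in>V. E v u \<and> f u = 2))
     \<and> (\<forall>v\<in>V. 0 < f v \<longrightarrow> (\<exists>u\<in>V. E v u \<and> 0 < f u))"

definition gamma_tR :: "'a set \<Rightarrow> ('a \<Rightarrow> 'a \<Rightarrow> bool) \<Rightarrow> nat" where
  "gamma_tR V E = Min {sum f V | f. is_trdf V E f}"

definition is_tds :: "'a set \<Rightarrow> ('a \<Rightarrow> 'a \<Rightarrow> bool) \<Rightarrow> 'a set \<Rightarrow> bool" where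
  "is_tds V E D \<longleftrightarrow> D \<subseteq> V \<and> (\<forall>v\<in>V. \<exists>u\<in>D. E v u)"

definition gamma_t :: "'a set \<Rightarrow> ('a \<Rightarrow> 'a \<Rightarrow> bool) \<Rightarrow> nat" where
  "gamma_t V E = Min {card D | D. is_tds V E D}"

definition universal :: "'a set \<Rightarrow> ('a \<Rightarrow> 'a \<Rightarrow> bool) \<Rightarrow> 'a \<Rightarrow> bool" where
  "universal V E u \<longleftrightarrow> u \<in> V \<and> (\<forall>v\<in>V. v \<noteq> u \<longrightarrow> E u v)"

definition num_universal :: "'a set \<Rightarrow> ('a \<Rightarrow> 'a \<Rightarrow> bool) \<Rightarrow> nat" where
  "num_universal V E = card {u. universal V E u}"

definition triangle_centered :: "'a set \<Rightarrow> ('a \<Rightarrow> 'a \<Rightarrow> bool) \<Rightarrow> bool" where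
  "triangle_centered V E \<longleftrightarrow> (\<exists>x\<in>V. \<exists>y\<in>V. \<exists>z\<in>V. E x y \<and> E y z \<and> E x z \<and>
      (\<forall>v\<in>V. 2 \<le> card {w \<in> {x, y, z}. E v w}))"

definition graph_iso :: "'a set \<Rightarrow> ('a \<Rightarrow> 'a \<Rightarrow> bool) \<Rightarrow> 'b set \<Rightarrow> ('b \<Rightarrow> 'b \<Rightarrow> bool) \<Rightarrow> bool" where
  "graph_iso V1 E1 V2 E2 \<longleftrightarrow> (\<exists>h. bij_betw h V1 V2 \<and>
      (\<forall>x\<in>V1. \<forall>y\<in>V1. E1 x y \<longleftrightarrow> E2 (h x) (h y)))"

definition K2_V :: "nat set" where "K2_V = {0, 1}"
definition K2_E :: "nat \<Rightarrow> nat \<Rightarrow> bool" where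
  "K2_E x y \<longleftrightarrow> x \<in> K2_V \<and> y \<in> K2_V \<and> x \<noteq> y"

definition is_K2 :: "'a set \<Rightarrow> ('a \<Rightarrow> 'a \<Rightarrow> bool) \<Rightarrow> bool" where
  "is_K2 V E \<longleftrightarrow> graph_iso V E K2_V K2_E"

end

theory Submission
  imports Defs
begin


definition valid :: "'a set \<Rightarrow> ('a \<Rightarrow> 'a \<Rightarrow> bool) \<Rightarrow> 'b set \<Rightarrow> ('b \<Rightarrow> 'b \<Rightarrow> bool)
   \<Rightarrow> ('a \<times> 'b) set \<Rightarrow> ('a \<times> 'b) set \<Rightarrow> bool" where
  "valid VG EG VH EH P A \<longleftrightarrow> A \<subseteq> P \<and> P \<subseteq> VG \<times> VH
    \<and> (\<forall>g\<in>VG. \<forall>h\<in>VH. \<exists>x y. (x,y) \<in> P \<and> EG g x \<and> EH h y)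
    \<and> (\<forall>g\<in>VG. \<forall>h\<in>VH. (g,h) \<notin> P \<longrightarrow> (\<exists>x y. (x,y) \<in> A \<and> EG g x \<and> EH h y))"

locale tg =
  fixes VG :: "'a set" and EG :: "'a \<Rightarrow> 'a \<Rightarrow> bool"
    and VH :: "'b set" and EH :: "'b \<Rightarrow> 'b \<Rightarrow> bool"
  assumes sG: "simple_graph VG EG" and nG: "no_isolated VG EG"
    and sH: "simple_graph VH EH" and nH: "no_isolated VH EH"
    and neG: "VG \<noteq> {}" and neH: "VH \<noteq> {}"
begin

lemma finG: "finite VG" using sG by (simp add: simple_graph_def)
lemma finH: "finite VH" using sH by (simp add: simple_graph_def)
lemma symG: "EG x y \<Longrightarrow> EG y x" using sG by (simp add: simple_graph_def)
lemma symH: "EH x y \<Longrightarrow> EH y x" using sH by (simp add: simple_graph_def)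
lemma irrG[simp]: "\<not> EG x x" using sG by (simp add: simple_graph_def)
lemma irrH[simp]: "\<not> EH x x" using sH by (simp add: simple_graph_def)
lemma VG1: "EG x y \<Longrightarrow> x \<in> VG" using sG by (simp add: simple_graph_def)
lemma VG2: "EG x y \<Longrightarrow> y \<in> VG" using sG by (simp add: simple_graph_def)
lemma VH1: "EH x y \<Longrightarrow> x \<in> VH" using sH by (simp add: simple_graph_def)
lemma VH2: "EH x y \<Longrightarrow> y \<in> VH" using sH by (simp add: simple_graph_def)
lemma nbG: "x \<in> VG \<Longrightarrow> \<exists>y. EG x y" using nG by (auto simp: no_isolated_def)
lemma nbH: "x \<in> VH \<Longrightarrow> \<exists>y. EH x y" using nH by (auto simp: no_isolated_def)
lemma neqG: "EG x y \<Longrightarrow> x \<noteq> y" by auto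
lemma neqH: "EH x y \<Longrightarrow> x \<noteq> y" by auto

lemma finV: "finite (VG \<times> VH)" using finG finH by simp

lemma cardG2: "2 \<le> card VG"
proof -
  obtain x where x: "x \<in> VG" using neG by blast
  obtain y where "EG x y" using nbG[OF x] by blast
  hence "{x,y} \<subseteq> VG" "x \<noteq> y" using x VG2 by auto
  thus ?thesis using card_mono[OF finG, of "{x,y}"] by simp
qed

lemma cardH2: "2 \<le> card VH"
proof -
  obtain x where x: "x \<in> VH" using neH by blast
  obtain y where "EH x y" using nbH[OF x] by blast
  hence "{x,y} \<subseteq> VH" "x \<noteq> y" using x VH2 by auto
  thus ?thesis using card_mono[OF finH, of "{x,y}"] by simp
qed

abbreviation "gam \<equiv> gamma_tR (VG \<times> VH) (dprod_edges EG EH)"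

lemma valid_trdf:
  assumes "valid VG EG VH EH P A"
  defines "f \<equiv> (\<lambda>v. if v \<in> A then 2 else if v \<in> P then 1 else (0::nat))"
  shows "is_trdf (VG \<times> VH) (dprod_edges EG EH) f \<and> sum f (VG \<times> VH) = card P + card A"
proof
  have AP: "A \<subseteq> P" and PV: "P \<subseteq> VG \<times> VH" using assms(1) by (auto simp: valid_def)
  show "is_trdf (VG \<times> VH) (dprod_edges EG EH) f"
    unfolding is_trdf_def
  proof (intro conjI ballI impI)
    fix v assume "v \<in> VG \<times> VH" thus "f v \<le> 2" by (simp add: f_def)
  next
    fix v assume v: "v \<in> VG \<times> VH" and "f v = 0"
    obtain a b where ab: "v = (a,b)" by (cases v)
    have "v \<notin> P" using AP \<open>f v = 0\<close> by (auto simp: f_def split: if_splits)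
    hence "\<exists>x y. (x,y) \<in> A \<and> EG a x \<and> EH b y"
      using assms(1) v unfolding valid_def ab by blast
    then obtain x y where xy: "(x,y) \<in> A" "EG a x" "EH b y" by blast
    have "(x,y) \<in> VG \<times> VH" using xy VG2 VH2 by blast
    moreover have "dprod_edges EG EH v (x,y)" using xy ab by (simp add: dprod_edges_def)
    moreover have "f (x,y) = 2" using xy by (simp add: f_def)
    ultimately show "\<exists>u\<in>VG \<times> VH. dprod_edges EG EH v u \<and> f u = 2" by blast
  next
    fix v assume v: "v \<in> VG \<times> VH" and "0 < f v"
    obtain a b where ab: "v = (a,b)" by (cases v)
    have "\<exists>x y. (x,y) \<in> P \<and> EG a x \<and> EH b y"
      using assms(1) v unfolding valid_def ab by blast
    then obtain x y where xy: "(x,y) \<in> P" "EG a x" "EH b y" by blast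
    have "(x,y) \<in> VG \<times> VH" using xy VG2 VH2 by blast
    moreover have "dprod_edges EG EH v (x,y)" using xy ab by (simp add: dprod_edges_def)
    moreover have "0 < f (x,y)" using xy by (simp add: f_def)
    ultimately show "\<exists>u\<in>VG \<times> VH. dprod_edges EG EH v u \<and> 0 < f u" by blast
  qed
  have fP: "finite P" using PV finV finite_subset by blast
  have "sum f (VG \<times> VH) = (\<Sum>v\<in>VG \<times> VH. (if v \<in> P then 1 else 0) + (if v \<in> A then 1 else 0))"
    using AP by (intro sum.cong) (auto simp: f_def)
  also have "\<dots> = card P + card A"
  proof -
    have i1: "VG \<times> VH \<inter> {x. x \<in> P} = P" using PV by blast
    have i2: "VG \<times> VH \<inter> {x. x \<in> A} = A" using PV AP by blast
    show ?thesis using finV by (simp only: sum.distrib sum.If_cases i1 i2) simp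
  qed
  finally show "sum f (VG \<times> VH) = card P + card A" .
qed

lemma trdf_valid:
  assumes "is_trdf (VG \<times> VH) (dprod_edges EG EH) f"
  shows "valid VG EG VH EH {v\<in>VG \<times> VH. 0 < f v} {v\<in>VG \<times> VH. f v = 2}
         \<and> sum f (VG \<times> VH) = card {v\<in>VG \<times> VH. 0 < f v} + card {v\<in>VG \<times> VH. f v = 2}"
proof
  show "valid VG EG VH EH {v\<in>VG \<times> VH. 0 < f v} {v\<in>VG \<times> VH. f v = 2}"
    unfolding valid_def
  proof (intro conjI ballI impI)
    fix g h assume gh: "g \<in> VG" "h \<in> VH"
    show "\<exists>x y. (x, y) \<in> {v \<in> VG \<times> VH. 0 < f v} \<and> EG g x \<and> EH h y"
    proof (cases "f (g,h) = 0")
      case True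
      have c: "\<forall>v\<in>VG \<times> VH. f v = 0 \<longrightarrow> (\<exists>u\<in>VG \<times> VH. dprod_edges EG EH v u \<and> f u = 2)"
        using assms unfolding is_trdf_def by blast
      have "(g,h) \<in> VG \<times> VH" using gh by simp
      from bspec[OF c this] True obtain u where "u \<in> VG \<times> VH" "dprod_edges EG EH (g,h) u" "f u = 2"
        by blast
      thus ?thesis by (cases u) (force simp: dprod_edges_def)
    next
      case False
      have c: "\<forall>v\<in>VG \<times> VH. 0 < f v \<longrightarrow> (\<exists>u\<in>VG \<times> VH. dprod_edges EG EH v u \<and> 0 < f u)"
        using assms unfolding is_trdf_def by blast
      have "(g,h) \<in> VG \<times> VH" using gh by simp
      from bspec[OF c this] False obtain u where "u \<in> VG \<times> VH" "dprod_edges EG EH (g,h) u" "0 < f u"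
        by blast
      thus ?thesis by (cases u) (auto simp: dprod_edges_def)
    qed
  next
    fix g h assume gh: "g \<in> VG" "h \<in> VH" "(g,h) \<notin> {v \<in> VG \<times> VH. 0 < f v}"
    have c: "\<forall>v\<in>VG \<times> VH. f v = 0 \<longrightarrow> (\<exists>u\<in>VG \<times> VH. dprod_edges EG EH v u \<and> f u = 2)"
      using assms unfolding is_trdf_def by blast
    have "(g,h) \<in> VG \<times> VH" "f (g,h) = 0" using gh by auto
    from bspec[OF c this(1)] this(2) obtain u where "u \<in> VG \<times> VH" "dprod_edges EG EH (g,h) u" "f u = 2"
      by blast
    thus "\<exists>x y. (x, y) \<in> {v \<in> VG \<times> VH. f v = 2} \<and> EG g x \<and> EH h y"
      by (cases u) (auto simp: dprod_edges_def)
  qed auto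
  have le2: "\<forall>v\<in>VG \<times> VH. f v \<le> 2" using assms by (simp add: is_trdf_def)
  have "sum f (VG \<times> VH) = (\<Sum>v\<in>VG \<times> VH. (if 0 < f v then 1 else 0) + (if f v = 2 then 1 else 0))"
  proof (intro sum.cong refl)
    fix v assume "v \<in> VG \<times> VH" 
    hence "f v \<le> 2" using le2 by blast
    thus "f v = (if 0 < f v then 1 else 0) + (if f v = 2 then 1 else 0)" by auto
  qed
  also have "\<dots> = card {v\<in>VG \<times> VH. 0 < f v} + card {v\<in>VG \<times> VH. f v = 2}"
  proof -
    have i1: "VG \<times> VH \<inter> {v. 0 < f v} = {v\<in>VG \<times> VH. 0 < f v}" by blast
    have i2: "VG \<times> VH \<inter> {v. f v = 2} = {v\<in>VG \<times> VH. f v = 2}" by blast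
    show ?thesis using finV by (simp add: sum.distrib sum.If_cases i1 i2)
  qed
  finally show "sum f (VG \<times> VH) = card {v\<in>VG \<times> VH. 0 < f v} + card {v\<in>VG \<times> VH. f v = 2}" .
qed

lemma valid_full: "valid VG EG VH EH (VG \<times> VH) {}"
  unfolding valid_def
proof (intro conjI ballI impI)
  fix g h assume "g \<in> VG" "h \<in> VH"
  then obtain x y where "EG g x" "EH h y" using nbG nbH by blast
  thus "\<exists>x y. (x, y) \<in> VG \<times> VH \<and> EG g x \<and> EH h y" using VG2 VH2 by blast
qed auto

lemma gam_set_fin: "finite {sum f (VG \<times> VH) |f. is_trdf (VG \<times> VH) (dprod_edges EG EH) f}"
proof (rule finite_subset[of _ "{..2 * card (VG \<times> VH)}"])
  show "{sum f (VG \<times> VH) |f. is_trdf (VG \<times> VH) (dprod_edges EG EH) f} \<subseteq> {..2 * card (VG \<times> VH)}"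
  proof
    fix s assume "s \<in> {sum f (VG \<times> VH) |f. is_trdf (VG \<times> VH) (dprod_edges EG EH) f}"
    then obtain f where f: "is_trdf (VG \<times> VH) (dprod_edges EG EH) f" "s = sum f (VG \<times> VH)" by blast
    have "sum f (VG \<times> VH) \<le> sum (\<lambda>_. 2) (VG \<times> VH)"
      using f(1) by (intro sum_mono) (auto simp: is_trdf_def)
    thus "s \<in> {..2 * card (VG \<times> VH)}" using f(2) by simp
  qed
qed simp

lemma gam_le:
  assumes "valid VG EG VH EH P A" shows "gam \<le> card P + card A"
proof -
  obtain f where "is_trdf (VG \<times> VH) (dprod_edges EG EH) f" "sum f (VG \<times> VH) = card P + card A"
    using valid_trdf[OF assms] by blast
  hence "card P + card A \<in> {sum f (VG \<times> VH) |f. is_trdf (VG \<times> VH) (dprod_edges EG EH) f}"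
    unfolding mem_Collect_eq by (intro exI[of _ f]) simp
  from Min_le[OF gam_set_fin this] show ?thesis unfolding gamma_tR_def .
qed

lemma gam_ex: "\<exists>P A. valid VG EG VH EH P A \<and> gam = card P + card A"
proof -
  have ne: "{sum f (VG \<times> VH) |f. is_trdf (VG \<times> VH) (dprod_edges EG EH) f} \<noteq> {}"
  proof -
    obtain f where "is_trdf (VG \<times> VH) (dprod_edges EG EH) f" using valid_trdf[OF valid_full] by blast
    thus ?thesis by blast
  qed
  have "gam \<in> {sum f (VG \<times> VH) |f. is_trdf (VG \<times> VH) (dprod_edges EG EH) f}"
    unfolding gamma_tR_def using Min_in[OF gam_set_fin ne] .
  then obtain f where "is_trdf (VG \<times> VH) (dprod_edges EG EH) f" "gam = sum f (VG \<times> VH)" by blast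
  thus ?thesis using trdf_valid[of f] by auto
qed

end


locale sg =
  fixes V :: "'a set" and E :: "'a \<Rightarrow> 'a \<Rightarrow> bool"
  assumes s: "simple_graph V E" and n: "no_isolated V E"
begin

lemma fin: "finite V" using s by (simp add: simple_graph_def)
lemma sym: "E x y \<Longrightarrow> E y x" using s by (simp add: simple_graph_def)
lemma irr[simp]: "\<not> E x x" using s by (simp add: simple_graph_def)
lemma V1: "E x y \<Longrightarrow> x \<in> V" using s by (simp add: simple_graph_def)
lemma V2: "E x y \<Longrightarrow> y \<in> V" using s by (simp add: simple_graph_def)
lemma nb: "x \<in> V \<Longrightarrow> \<exists>y. E x y" using n by (auto simp: no_isolated_def)

lemma univ_fin: "finite {u. universal V E u}"
  using fin by (rule finite_subset[rotated]) (auto simp: universal_def)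

lemma nu1: "1 \<le> num_universal V E \<longleftrightarrow> (\<exists>u. universal V E u)"
  unfolding num_universal_def using univ_fin
  by (simp add: Suc_le_eq card_gt_0_iff)

lemma nu2: "2 \<le> num_universal V E \<longleftrightarrow> (\<exists>u1 u2. u1 \<noteq> u2 \<and> universal V E u1 \<and> universal V E u2)"
proof
  assume "2 \<le> num_universal V E"
  hence "1 < card {u. universal V E u}" unfolding num_universal_def by simp
  then obtain u1 u2 where "u1 \<in> {u. universal V E u}" "u2 \<in> {u. universal V E u}" "u1 \<noteq> u2"
    using card_le_Suc0_iff_eq[OF univ_fin] by (metis One_nat_def not_le)
  thus "\<exists>u1 u2. u1 \<noteq> u2 \<and> universal V E u1 \<and> universal V E u2" by blast
next
  assume "\<exists>u1 u2. u1 \<noteq> u2 \<and> universal V E u1 \<and> universal V E u2"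
  then obtain u1 u2 where "u1 \<noteq> u2" "universal V E u1" "universal V E u2" by blast
  hence "{u1,u2} \<subseteq> {u. universal V E u}" by blast
  from card_mono[OF univ_fin this] \<open>u1 \<noteq> u2\<close> show "2 \<le> num_universal V E"
    unfolding num_universal_def by simp
qed

lemma card2_elems:
  assumes "card V = 2"
  obtains a b where "V = {a,b}" "a \<noteq> b" "E a b"
proof -
  obtain a b where ab: "V = {a,b}" "a \<noteq> b" using assms by (meson card_2_iff)
  obtain c where "E a c" using nb ab by blast
  hence "c = b" using V2 ab irr by (metis insertE singletonD)
  thus ?thesis using that ab \<open>E a c\<close> by blast
qed

lemma card2_univ: "card V = 2 \<Longrightarrow> v \<in> V \<Longrightarrow> universal V E v"
  by (erule card2_elems) (auto simp: universal_def dest: sym)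

lemma card2_nu: "card V = 2 \<Longrightarrow> num_universal V E = 2"
proof -
  assume c: "card V = 2"
  have "{u. universal V E u} = V" using card2_univ[OF c] by (auto simp: universal_def)
  thus ?thesis using c by (simp add: num_universal_def)
qed

lemma card3_univ:
  assumes ne: "V \<noteq> {}" and c: "card V \<le> 3"
  shows "\<exists>u. universal V E u"
proof -
  obtain a where a: "a \<in> V" using ne by blast
  obtain b where ab: "E a b" using nb[OF a] by blast
  have b: "b \<in> V" using V2[OF ab] .
  show ?thesis
  proof (cases "V \<subseteq> {a,b}")
    case True
    hence "universal V E a" using ab a by (auto simp: universal_def)
    thus ?thesis by blast
  next
    case False
    then obtain c where cV: "c \<in> V" and cab: "c \<noteq> a" "c \<noteq> b" by blast
    have anb: "a \<noteq> b" using ab by auto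
    have sub: "{a,b,c} \<subseteq> V" using a b cV by blast
    have "card {a,b,c} = 3" using anb cab by simp
    hence Veq: "V = {a,b,c}" using card_subset_eq[OF fin sub] c card_mono[OF fin sub] by simp
    show ?thesis
    proof (cases "E a c")
      case True
      hence "universal V E a" using ab Veq by (auto simp: universal_def)
      thus ?thesis by blast
    next
      case False
      obtain d where cd: "E c d" using nb[OF cV] by blast
      have "d \<in> V" using V2[OF cd] .
      hence "d = b" using cd False Veq sym by auto
      hence "universal V E b" using ab cd Veq sym by (auto simp: universal_def)
      thus ?thesis by blast
    qed
  qed
qed

lemma K2_iff: "is_K2 V E \<longleftrightarrow> card V = 2"
proof
  assume "is_K2 V E"
  then obtain h where "bij_betw h V K2_V" unfolding is_K2_def graph_iso_def by blast
  hence "card V = card K2_V" by (rule bij_betw_same_card)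
  thus "card V = 2" by (simp add: K2_V_def)
next
  assume c: "card V = 2"
  then obtain a b where ab: "V = {a,b}" "a \<noteq> b" "E a b" by (rule card2_elems)
  define h where "h = (\<lambda>v. if v = a then (0::nat) else 1)"
  have "bij_betw h V K2_V" unfolding bij_betw_def inj_on_def h_def K2_V_def using ab by auto
  moreover have "\<forall>x\<in>V. \<forall>y\<in>V. E x y \<longleftrightarrow> K2_E (h x) (h y)"
    using ab sym by (auto simp: K2_E_def K2_V_def h_def)
  ultimately show "is_K2 V E" unfolding is_K2_def graph_iso_def by blast
qed

lemma TC_card: "triangle_centered V E \<Longrightarrow> 3 \<le> card V"
proof -
  assume "triangle_centered V E"
  then obtain x y z where "x \<in> V" "y \<in> V" "z \<in> V" "E x y" "E y z" "E x z"
    unfolding triangle_centered_def by blast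
  moreover have "x \<noteq> y" "y \<noteq> z" "x \<noteq> z" using \<open>E x y\<close> \<open>E y z\<close> \<open>E x z\<close> irr by metis+
  ultimately have "{x,y,z} \<subseteq> V" "card {x,y,z} = 3" by auto
  thus ?thesis using card_mono[OF fin] by metis
qed

lemma gt2:
  assumes "gamma_t V E = 2"
  shows "\<exists>a b. a \<in> V \<and> b \<in> V \<and> E a b \<and> (\<forall>v\<in>V. E v a \<or> E v b)"
proof -
  have fs: "finite {card D | D. is_tds V E D}"
    by (rule finite_subset[of _ "{..card V}"]) (auto simp: is_tds_def intro: card_mono[OF fin])
  have "is_tds V E V" unfolding is_tds_def using nb V2 by blast
  hence "{card D | D. is_tds V E D} \<noteq> {}" by blast
  from Min_in[OF fs this] assms obtain D where D: "is_tds V E D" "card D = 2"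
    unfolding gamma_t_def by auto
  then obtain a b where Dab: "D = {a,b}" "a \<noteq> b" by (meson card_2_iff)
  have "a \<in> V" "b \<in> V" using D Dab by (auto simp: is_tds_def)
  moreover have "\<exists>u\<in>D. E a u" using D \<open>a \<in> V\<close> by (auto simp: is_tds_def)
  hence "E a b" using Dab by auto
  moreover have "\<forall>v\<in>V. E v a \<or> E v b" using D Dab by (auto simp: is_tds_def)
  ultimately show ?thesis by blast
qed

end

lemma empty_facts:
  "num_universal {} E = 0" "\<not> triangle_centered {} E" "\<not> is_K2 {} E" "gamma_t {} E = 0"
proof -
  show "num_universal {} E = 0" by (simp add: num_universal_def universal_def)
  show "\<not> triangle_centered {} E" by (simp add: triangle_centered_def)
  show "\<not> is_K2 {} E" unfolding is_K2_def graph_iso_def bij_betw_def K2_V_def by auto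
  have "{card D | D. is_tds {} E D} = {0}" by (auto simp: is_tds_def)
  thus "gamma_t {} E = 0" by (simp add: gamma_t_def)
qed

lemma two_of_three:
  assumes "2 \<le> card {w \<in> {x,y,z}. E v w}"
  shows "(E v x \<and> E v y) \<or> (E v x \<and> E v z) \<or> (E v y \<and> E v z)"
proof (rule ccontr)
  assume "\<not> ?thesis"
  hence "\<exists>u. {w \<in> {x,y,z}. E v w} \<subseteq> {u}" by auto
  then obtain u where "{w \<in> {x,y,z}. E v w} \<subseteq> {u}" by blast
  from card_mono[OF _ this] have "card {w \<in> {x,y,z}. E v w} \<le> 1" by simp
  thus False using assms by simp
qed

lemma not_two_of_three:
  assumes "\<not> 2 \<le> card {w \<in> {x,y,z}. E v w}" "x \<noteq> y" "x \<noteq> z" "y \<noteq> z"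
  shows "(\<not> E v x \<and> \<not> E v y) \<or> (\<not> E v x \<and> \<not> E v z) \<or> (\<not> E v y \<and> \<not> E v z)"
proof (rule ccontr)
  assume "\<not> ?thesis"
  then obtain p q where "p \<in> {x,y,z}" "q \<in> {x,y,z}" "p \<noteq> q" "E v p" "E v q" using assms(2-4) by blast
  hence "{p,q} \<subseteq> {w \<in> {x,y,z}. E v w}" by blast
  from card_mono[OF _ this] \<open>p \<noteq> q\<close> have "2 \<le> card {w \<in> {x,y,z}. E v w}" by simp
  thus False using assms(1) by simp
qed


lemma validI:
  assumes "A \<subseteq> P" "P \<subseteq> VG \<times> VH"
    "\<And>g h. g \<in> VG \<Longrightarrow> h \<in> VH \<Longrightarrow> \<exists>x y. (x,y) \<in> P \<and> EG g x \<and> EH h y"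
    "\<And>g h. g \<in> VG \<Longrightarrow> h \<in> VH \<Longrightarrow> (g,h) \<notin> P \<Longrightarrow> \<exists>x y. (x,y) \<in> A \<and> EG g x \<and> EH h y"
  shows "valid VG EG VH EH P A"
  unfolding valid_def
  apply (intro conjI ballI impI)
     apply (rule assms(1))
    apply (rule assms(2))
   apply (erule (1) assms(3))
  apply (erule (2) assms(4))
  done

lemma univE: 
  assumes "universal V E u" "simple_graph V E" "v \<in> V" "v \<noteq> u" shows "E v u"
proof -
  have "E u v" using assms(1,3,4) unfolding universal_def by blast
  moreover have "\<forall>x y. E x y \<longrightarrow> E y x" using assms(2) by (simp add: simple_graph_def)
  ultimately show ?thesis by blast
qed

lemma univV: "universal V E u \<Longrightarrow> u \<in> V"
  unfolding universal_def by blast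

lemma card_list_le: "card (set xs) \<le> length xs" by (rule card_length)

context tg
begin

lemma U4: "card VG = 2 \<Longrightarrow> card VH = 2 \<Longrightarrow> gam \<le> 4"
  using gam_le[OF valid_full] by (simp add: card_cartesian_product)

lemma U6a:
  assumes u: "universal VG EG u1" "universal VG EG u2" "u1 \<noteq> u2"
    and v: "universal VH EH v1" "universal VH EH v2" "v1 \<noteq> v2"
  shows "gam \<le> 6"
proof -
  have g1: "\<And>g. g \<in> VG \<Longrightarrow> g \<noteq> u1 \<Longrightarrow> EG g u1" using univE[OF u(1) sG] by blast
  have g2: "\<And>g. g \<in> VG \<Longrightarrow> g \<noteq> u2 \<Longrightarrow> EG g u2" using univE[OF u(2) sG] by blast
  have h1: "\<And>h. h \<in> VH \<Longrightarrow> h \<noteq> v1 \<Longrightarrow> EH h v1" using univE[OF v(1) sH] by blast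
  have h2: "\<And>h. h \<in> VH \<Longrightarrow> h \<noteq> v2 \<Longrightarrow> EH h v2" using univE[OF v(2) sH] by blast
  have m: "u1 \<in> VG" "u2 \<in> VG" "v1 \<in> VH" "v2 \<in> VH" using u v univV by metis+
  let ?P = "set [(u1,v1),(u2,v2),(u1,v2),(u2,v1)]" and ?A = "set [(u1,v1),(u2,v2)]"
  have "valid VG EG VH EH ?P ?A"
  proof (rule validI)
    show "?A \<subseteq> ?P" by auto
    show "?P \<subseteq> VG \<times> VH" using m by auto
  next
    fix g h assume gh: "g \<in> VG" "h \<in> VH"
    have "(g \<noteq> u1 \<and> h \<noteq> v1) \<or> (g \<noteq> u2 \<and> h \<noteq> v2) \<or> (g = u1 \<and> h = v2) \<or> (g = u2 \<and> h = v1)"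
      using u(3) v(3) by blast
    thus "\<exists>x y. (x, y) \<in> ?P \<and> EG g x \<and> EH h y"
    proof (elim disjE)
      assume "g \<noteq> u1 \<and> h \<noteq> v1" thus ?thesis using g1 h1 gh by auto
    next
      assume "g \<noteq> u2 \<and> h \<noteq> v2" thus ?thesis using g2 h2 gh by auto
    next
      assume "g = u1 \<and> h = v2" thus ?thesis using g2 h1 m u(3) v(3) by auto
    next
      assume "g = u2 \<and> h = v1" thus ?thesis using g1 h2 m u(3) v(3) by auto
    qed
  next
    fix g h assume gh: "g \<in> VG" "h \<in> VH" "(g,h) \<notin> ?P"
    hence "(g \<noteq> u1 \<and> h \<noteq> v1) \<or> (g \<noteq> u2 \<and> h \<noteq> v2)" using u(3) v(3) by auto
    thus "\<exists>x y. (x, y) \<in> ?A \<and> EG g x \<and> EH h y"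
    proof (elim disjE)
      assume "g \<noteq> u1 \<and> h \<noteq> v1" thus ?thesis using g1 h1 gh by auto
    next
      assume "g \<noteq> u2 \<and> h \<noteq> v2" thus ?thesis using g2 h2 gh by auto
    qed
  qed
  from gam_le[OF this] have "gam \<le> card ?P + card ?A" .
  also have "\<dots> \<le> 4 + 2" using card_list_le[of "[(u1,v1),(u2,v2),(u1,v2),(u2,v1)]"]
      card_list_le[of "[(u1,v1),(u2,v2)]"] by simp
  finally show ?thesis by simp
qed


sublocale Gs: sg VG EG using sG nG by unfold_locales
sublocale Hs: sg VH EH using sH nH by unfold_locales

lemma other_vertex_G: "\<exists>x\<in>VG. x \<noteq> u"
proof -
  have "\<not> VG \<subseteq> {u}" using cardG2 card_mono[of "{u}" VG] by auto
  thus ?thesis by blast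
qed

lemma other_vertex_H: "\<exists>x\<in>VH. x \<noteq> u"
proof -
  have "\<not> VH \<subseteq> {u}" using cardH2 card_mono[of "{u}" VH] by auto
  thus ?thesis by blast
qed

lemma U6b:
  assumes c: "card VG = 2" and u: "universal VH EH u"
  shows "gam \<le> 6"
proof -
  obtain p q where pq: "VG = {p,q}" "p \<noteq> q" "EG p q" using Gs.card2_elems[OF c] by blast
  have qp: "EG q p" using pq(3) symG by blast
  obtain x where x: "x \<in> VH" "x \<noteq> u" using other_vertex_H by blast
  have hu: "\<And>h. h \<in> VH \<Longrightarrow> h \<noteq> u \<Longrightarrow> EH h u" using univE[OF u sH] by blast
  have ux: "EH u x" using hu[OF x] symH by blast
  have uV: "u \<in> VH" using univV[OF u] .
  let ?P = "set [(p,u),(q,u),(p,x),(q,x)]" and ?A = "set [(p,u),(q,u)]"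
  have "valid VG EG VH EH ?P ?A"
  proof (rule validI)
    show "?A \<subseteq> ?P" by auto
    show "?P \<subseteq> VG \<times> VH" using pq x uV by auto
  next
    fix g h assume gh: "g \<in> VG" "h \<in> VH"
    show "\<exists>x y. (x, y) \<in> ?P \<and> EG g x \<and> EH h y"
    proof (cases "h = u")
      case True
      thus ?thesis using gh pq qp ux by auto
    next
      case False
      thus ?thesis using gh pq qp hu by auto
    qed
  next
    fix g h assume gh: "g \<in> VG" "h \<in> VH" "(g,h) \<notin> ?P"
    hence "h \<noteq> u" using pq by auto
    thus "\<exists>x y. (x, y) \<in> ?A \<and> EG g x \<and> EH h y" using gh pq qp hu by auto
  qed
  from gam_le[OF this] have "gam \<le> card ?P + card ?A" .
  also have "\<dots> \<le> 4 + 2" using card_list_le[of "[(p,u),(q,u),(p,x),(q,x)]"]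
      card_list_le[of "[(p,u),(q,u)]"] by simp
  finally show ?thesis by simp
qed

lemma U6b':
  assumes c: "card VH = 2" and u: "universal VG EG u"
  shows "gam \<le> 6"
proof -
  obtain p q where pq: "VH = {p,q}" "p \<noteq> q" "EH p q" using Hs.card2_elems[OF c] by blast
  have qp: "EH q p" using pq(3) symH by blast
  obtain x where x: "x \<in> VG" "x \<noteq> u" using other_vertex_G by blast
  have hu: "\<And>h. h \<in> VG \<Longrightarrow> h \<noteq> u \<Longrightarrow> EG h u" using univE[OF u sG] by blast
  have ux: "EG u x" using hu[OF x] symG by blast
  have uV: "u \<in> VG" using univV[OF u] .
  let ?P = "set [(u,p),(u,q),(x,p),(x,q)]" and ?A = "set [(u,p),(u,q)]"
  have "valid VG EG VH EH ?P ?A"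
  proof (rule validI)
    show "?A \<subseteq> ?P" by auto
    show "?P \<subseteq> VG \<times> VH" using pq x uV by auto
  next
    fix g h assume gh: "g \<in> VG" "h \<in> VH"
    show "\<exists>x y. (x, y) \<in> ?P \<and> EG g x \<and> EH h y"
    proof (cases "g = u")
      case True
      thus ?thesis using gh pq qp ux by auto
    next
      case False
      thus ?thesis using gh pq qp hu by auto
    qed
  next
    fix g h assume gh: "g \<in> VG" "h \<in> VH" "(g,h) \<notin> ?P"
    hence "g \<noteq> u" using pq by auto
    thus "\<exists>x y. (x, y) \<in> ?A \<and> EG g x \<and> EH h y" using gh pq qp hu by auto
  qed
  from gam_le[OF this] have "gam \<le> card ?P + card ?A" .
  also have "\<dots> \<le> 4 + 2" using card_list_le[of "[(u,p),(u,q),(x,p),(x,q)]"]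
      card_list_le[of "[(u,p),(u,q)]"] by simp
  finally show ?thesis by simp
qed

lemma U6c:
  assumes "triangle_centered VG EG" "triangle_centered VH EH"
  shows "gam \<le> 6"
proof -
  obtain x1 x2 x3 where x: "x1 \<in> VG" "x2 \<in> VG" "x3 \<in> VG" "EG x1 x2" "EG x2 x3" "EG x1 x3"
     and tx: "\<forall>v\<in>VG. 2 \<le> card {w \<in> {x1,x2,x3}. EG v w}"
    using assms(1) unfolding triangle_centered_def by blast
  obtain y1 y2 y3 where y: "y1 \<in> VH" "y2 \<in> VH" "y3 \<in> VH" "EH y1 y2" "EH y2 y3" "EH y1 y3"
     and ty: "\<forall>v\<in>VH. 2 \<le> card {w \<in> {y1,y2,y3}. EH v w}"
    using assms(2) unfolding triangle_centered_def by blast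
  let ?P = "set [(x1,y1),(x2,y2),(x3,y3)]"
  have cov: "\<exists>x y. (x, y) \<in> ?P \<and> EG g x \<and> EH h y" if gh: "g \<in> VG" "h \<in> VH" for g h
  proof -
    have a: "(EG g x1 \<and> EG g x2) \<or> (EG g x1 \<and> EG g x3) \<or> (EG g x2 \<and> EG g x3)"
      by (rule two_of_three[where E=EG and v=g and x=x1 and y=x2 and z=x3, OF bspec[OF tx gh(1)]])
    have b: "(EH h y1 \<and> EH h y2) \<or> (EH h y1 \<and> EH h y3) \<or> (EH h y2 \<and> EH h y3)"
      by (rule two_of_three[where E=EH and v=h and x=y1 and y=y2 and z=y3, OF bspec[OF ty gh(2)]])
    have "(EG g x1 \<and> EH h y1) \<or> (EG g x2 \<and> EH h y2) \<or> (EG g x3 \<and> EH h y3)"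
      using a b by argo
    thus ?thesis
    proof (elim disjE)
      assume "EG g x1 \<and> EH h y1" thus ?thesis by (intro exI[of _ x1] exI[of _ y1]) simp
    next
      assume "EG g x2 \<and> EH h y2" thus ?thesis by (intro exI[of _ x2] exI[of _ y2]) simp
    next
      assume "EG g x3 \<and> EH h y3" thus ?thesis by (intro exI[of _ x3] exI[of _ y3]) simp
    qed
  qed
  have "valid VG EG VH EH ?P ?P"
  proof (rule validI)
    show "?P \<subseteq> VG \<times> VH" using x y by simp
  next
    fix g h assume "g \<in> VG" "h \<in> VH" thus "\<exists>x y. (x, y) \<in> ?P \<and> EG g x \<and> EH h y" by (rule cov)
  next
    fix g h assume "g \<in> VG" "h \<in> VH" thus "\<exists>x y. (x, y) \<in> ?P \<and> EG g x \<and> EH h y" by (rule cov)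
  qed (rule subset_refl)
  from gam_le[OF this] have "gam \<le> card ?P + card ?P" .
  also have "\<dots> \<le> 3 + 3" using card_list_le[of "[(x1,y1),(x2,y2),(x3,y3)]"] by simp
  finally show ?thesis by simp
qed

lemma U7:
  assumes u: "universal VG EG u" and v: "universal VH EH v"
  shows "gam \<le> 7"
proof -
  obtain g1 where g1: "g1 \<in> VG" "g1 \<noteq> u" using other_vertex_G by blast
  obtain h1 where h1: "h1 \<in> VH" "h1 \<noteq> v" using other_vertex_H by blast
  have gu: "\<And>g. g \<in> VG \<Longrightarrow> g \<noteq> u \<Longrightarrow> EG g u" using univE[OF u sG] by blast
  have hv: "\<And>h. h \<in> VH \<Longrightarrow> h \<noteq> v \<Longrightarrow> EH h v" using univE[OF v sH] by blast
  have ug: "EG u g1" using gu[OF g1] symG by blast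
  have vh: "EH v h1" using hv[OF h1] symH by blast
  have uv: "u \<in> VG" "v \<in> VH" using univV u v by metis+
  let ?P = "set [(u,v),(u,h1),(g1,v),(g1,h1)]" and ?A = "set [(u,v),(u,h1),(g1,v)]"
  have "valid VG EG VH EH ?P ?A"
  proof (rule validI)
    show "?A \<subseteq> ?P" by auto
    show "?P \<subseteq> VG \<times> VH" using uv g1 h1 by auto
  next
    fix g h assume gh: "g \<in> VG" "h \<in> VH"
    have "(g \<noteq> u \<and> h \<noteq> v) \<or> (g = u \<and> h \<noteq> v) \<or> (g = u \<and> h = v) \<or> (g \<noteq> u \<and> h = v)" by blast
    thus "\<exists>x y. (x, y) \<in> ?P \<and> EG g x \<and> EH h y"
    proof (elim disjE)
      assume "g \<noteq> u \<and> h \<noteq> v" thus ?thesis using gh gu hv by auto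
    next
      assume "g = u \<and> h \<noteq> v" thus ?thesis using gh ug hv by auto
    next
      assume "g = u \<and> h = v" thus ?thesis using ug vh by auto
    next
      assume "g \<noteq> u \<and> h = v" thus ?thesis using gh gu vh by auto
    qed
  next
    fix g h assume gh: "g \<in> VG" "h \<in> VH" "(g,h) \<notin> ?P"
    have "(g \<noteq> u \<and> h \<noteq> v) \<or> (g = u \<and> h \<noteq> v) \<or> (g \<noteq> u \<and> h = v)" using gh(3) by auto
    thus "\<exists>x y. (x, y) \<in> ?A \<and> EG g x \<and> EH h y"
    proof (elim disjE)
      assume "g \<noteq> u \<and> h \<noteq> v" thus ?thesis using gh gu hv by auto
    next
      assume "g = u \<and> h \<noteq> v" thus ?thesis using gh ug hv by auto
    next
      assume "g \<noteq> u \<and> h = v" thus ?thesis using gh gu vh by auto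
    qed
  qed
  from gam_le[OF this] have "gam \<le> card ?P + card ?A" .
  also have "\<dots> \<le> 4 + 3" using card_list_le[of "[(u,v),(u,h1),(g1,v),(g1,h1)]"]
      card_list_le[of "[(u,v),(u,h1),(g1,v)]"] by simp
  finally show ?thesis by simp
qed

lemma U8:
  assumes "gamma_t VG EG = 2" "gamma_t VH EH = 2"
  shows "gam \<le> 8"
proof -
  obtain a b where ab: "a \<in> VG" "b \<in> VG" "\<forall>v\<in>VG. EG v a \<or> EG v b"
    using Gs.gt2[OF assms(1)] by blast
  obtain c d where cd: "c \<in> VH" "d \<in> VH" "\<forall>v\<in>VH. EH v c \<or> EH v d"
    using Hs.gt2[OF assms(2)] by blast
  let ?P = "set [(a,c),(a,d),(b,c),(b,d)]"
  have cov: "\<exists>x y. (x, y) \<in> ?P \<and> EG g x \<and> EH h y" if gh: "g \<in> VG" "h \<in> VH" for g h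
  proof -
    have "EG g a \<or> EG g b" "EH h c \<or> EH h d" using ab(3) cd(3) gh by auto
    hence "(EG g a \<and> EH h c) \<or> (EG g a \<and> EH h d) \<or> (EG g b \<and> EH h c) \<or> (EG g b \<and> EH h d)" by argo
    thus ?thesis
    proof (elim disjE)
      assume "EG g a \<and> EH h c" thus ?thesis by (intro exI[of _ a] exI[of _ c]) simp
    next
      assume "EG g a \<and> EH h d" thus ?thesis by (intro exI[of _ a] exI[of _ d]) simp
    next
      assume "EG g b \<and> EH h c" thus ?thesis by (intro exI[of _ b] exI[of _ c]) simp
    next
      assume "EG g b \<and> EH h d" thus ?thesis by (intro exI[of _ b] exI[of _ d]) simp
    qed
  qed
  have "valid VG EG VH EH ?P ?P"
  proof (rule validI)
    show "?P \<subseteq> VG \<times> VH" using ab cd by simp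
  next
    fix g h assume "g \<in> VG" "h \<in> VH" thus "\<exists>x y. (x, y) \<in> ?P \<and> EG g x \<and> EH h y" by (rule cov)
  next
    fix g h assume "g \<in> VG" "h \<in> VH" thus "\<exists>x y. (x, y) \<in> ?P \<and> EG g x \<and> EH h y" by (rule cov)
  qed (rule subset_refl)
  from gam_le[OF this] have "gam \<le> card ?P + card ?P" .
  also have "\<dots> \<le> 4 + 4" using card_list_le[of "[(a,c),(a,d),(b,c),(b,d)]"] by simp
  finally show ?thesis by simp
qed

end


context tg
begin

abbreviation "vd P A \<equiv> valid VG EG VH EH P A"

lemma vAP: "vd P A \<Longrightarrow> A \<subseteq> P" by (simp add: valid_def)
lemma vPV: "vd P A \<Longrightarrow> P \<subseteq> VG \<times> VH" by (simp add: valid_def)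
lemma vfinP: "vd P A \<Longrightarrow> finite P" using vPV finV finite_subset by blast
lemma vfinA: "vd P A \<Longrightarrow> finite A" using vAP vfinP finite_subset by blast
lemma vcov: "vd P A \<Longrightarrow> g \<in> VG \<Longrightarrow> h \<in> VH \<Longrightarrow> \<exists>x y. (x,y) \<in> P \<and> EG g x \<and> EH h y"
  unfolding valid_def by blast
lemma vdom: "vd P A \<Longrightarrow> g \<in> VG \<Longrightarrow> h \<in> VH \<Longrightarrow> (g,h) \<notin> P \<Longrightarrow> \<exists>x y. (x,y) \<in> A \<and> EG g x \<and> EH h y"
  unfolding valid_def by blast
lemma vin:
  assumes "vd P A" "g \<in> VG" "h \<in> VH" "\<And>x y. (x,y) \<in> A \<Longrightarrow> EG g x \<Longrightarrow> EH h y \<Longrightarrow> False"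
  shows "(g,h) \<in> P"
  using vdom[OF assms(1-3)] assms(4) by blast
lemma card_le_P: "vd P A \<Longrightarrow> S \<subseteq> P \<Longrightarrow> card S \<le> card P"
  using card_mono vfinP by blast

lemma row_trick:
  assumes v: "vd P A" and x: "x \<in> VG"
  shows "\<exists>g1 h1 g2 h2. (g1,h1) \<in> P \<and> (g2,h2) \<in> P \<and> EG x g1 \<and> EG x g2 \<and> h1 \<noteq> h2"
proof -
  obtain h where h: "h \<in> VH" using neH by blast
  obtain g1 h1 where 1: "(g1,h1) \<in> P" "EG x g1" "EH h h1" using vcov[OF v x h] by blast
  have h1: "h1 \<in> VH" using VH2[OF 1(3)] .
  obtain g2 h2 where 2: "(g2,h2) \<in> P" "EG x g2" "EH h1 h2" using vcov[OF v x h1] by blast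
  have "h1 \<noteq> h2" using 2(3) by auto
  thus ?thesis using 1 2 by blast
qed

lemma col_trick:
  assumes v: "vd P A" and y: "y \<in> VH"
  shows "\<exists>g1 h1 g2 h2. (g1,h1) \<in> P \<and> (g2,h2) \<in> P \<and> EH y h1 \<and> EH y h2 \<and> g1 \<noteq> g2"
proof -
  obtain g where g: "g \<in> VG" using neG by blast
  obtain g1 h1 where 1: "(g1,h1) \<in> P" "EG g g1" "EH y h1" using vcov[OF v g y] by blast
  have g1: "g1 \<in> VG" using VG2[OF 1(2)] .
  obtain g2 h2 where 2: "(g2,h2) \<in> P" "EG g1 g2" "EH y h2" using vcov[OF v g1 y] by blast
  have "g1 \<noteq> g2" using 2(2) by auto
  thus ?thesis using 1 2 by blast
qed

lemma three:
  assumes v: "vd P A"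
  shows "\<exists>x1 y1 x2 y2 x3 y3. (x1,y1) \<in> P \<and> (x2,y2) \<in> P \<and> (x3,y3) \<in> P
     \<and> EG x1 x2 \<and> EH y1 y2 \<and> EG x1 x3 \<and> EH y2 y3"
proof -
  obtain g h where gh: "g \<in> VG" "h \<in> VH" using neG neH by blast
  obtain x1 y1 where 1: "(x1,y1) \<in> P" "EG g x1" "EH h y1" using vcov[OF v gh] by blast
  have x1: "x1 \<in> VG" "y1 \<in> VH" using VG2[OF 1(2)] VH2[OF 1(3)] by auto
  obtain x2 y2 where 2: "(x2,y2) \<in> P" "EG x1 x2" "EH y1 y2" using vcov[OF v x1] by blast
  have y2: "y2 \<in> VH" using VH2[OF 2(3)] .
  obtain x3 y3 where 3: "(x3,y3) \<in> P" "EG x1 x3" "EH y2 y3" using vcov[OF v x1(1) y2] by blast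
  show ?thesis using 1 2 3 by blast
qed

lemma P_ge3: "vd P A \<Longrightarrow> 3 \<le> card P"
proof -
  assume v: "vd P A"
  obtain x1 y1 x2 y2 x3 y3 where t: "(x1,y1) \<in> P" "(x2,y2) \<in> P" "(x3,y3) \<in> P"
     "EG x1 x2" "EH y1 y2" "EG x1 x3" "EH y2 y3" using three[OF v] by blast
  have d: "x1 \<noteq> x2" "x1 \<noteq> x3" "y2 \<noteq> y3" using t by auto
  have "card {(x1,y1),(x2,y2),(x3,y3)} = 3" using d by auto
  moreover have "{(x1,y1),(x2,y2),(x3,y3)} \<subseteq> P" using t by auto
  ultimately show ?thesis using card_le_P[OF v] by metis
qed

lemma P3struct:
  assumes v: "vd P A" and c: "card P \<le> 3"
  shows "\<exists>x1 y1 x2 y2 x3 y3. P = {(x1,y1),(x2,y2),(x3,y3)}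
     \<and> EG x1 x2 \<and> EG x1 x3 \<and> EG x2 x3 \<and> EH y1 y2 \<and> EH y1 y3 \<and> EH y2 y3"
proof -
  obtain x1 y1 x2 y2 x3 y3 where t: "(x1,y1) \<in> P" "(x2,y2) \<in> P" "(x3,y3) \<in> P"
     "EG x1 x2" "EH y1 y2" "EG x1 x3" "EH y2 y3" using three[OF v] by blast
  have d: "x1 \<noteq> x2" "x1 \<noteq> x3" "y2 \<noteq> y3" using t by auto
  have c3: "card {(x1,y1),(x2,y2),(x3,y3)} = 3" using d by auto
  have sub: "{(x1,y1),(x2,y2),(x3,y3)} \<subseteq> P" using t by auto
  have Peq: "P = {(x1,y1),(x2,y2),(x3,y3)}"
    using card_subset_eq[OF vfinP[OF v] sub] c3 c card_le_P[OF v sub] by simp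
  have m: "x2 \<in> VG" "y1 \<in> VH" using VG2[OF t(4)] VH1[OF t(5)] by auto
  obtain x y where xy: "(x,y) \<in> P" "EG x2 x" "EH y1 y" using vcov[OF v m] by blast
  have "(x,y) = (x3,y3)" using xy Peq by auto
  hence "EG x2 x3" "EH y1 y3" using xy by auto
  thus ?thesis using Peq t by blast
qed

lemma TC_G_crit:
  assumes e: "EG x1 x2" "EG x1 x3" "EG x2 x3"
    and nb: "\<And>g. g \<in> VG \<Longrightarrow> \<not> EG g x1 \<Longrightarrow> \<not> EG g x2 \<Longrightarrow> False"
            "\<And>g. g \<in> VG \<Longrightarrow> \<not> EG g x1 \<Longrightarrow> \<not> EG g x3 \<Longrightarrow> False"
            "\<And>g. g \<in> VG \<Longrightarrow> \<not> EG g x2 \<Longrightarrow> \<not> EG g x3 \<Longrightarrow> False"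
  shows "triangle_centered VG EG"
  unfolding triangle_centered_def
proof (intro bexI conjI ballI)
  show "EG x1 x2" "EG x2 x3" "EG x1 x3" using e by auto
  show "x1 \<in> VG" "x2 \<in> VG" "x3 \<in> VG" using e VG1 VG2 by blast+
  fix v assume v: "v \<in> VG"
  have d: "x1 \<noteq> x2" "x1 \<noteq> x3" "x2 \<noteq> x3" using e by auto
  show "2 \<le> card {w \<in> {x1, x2, x3}. EG v w}"
  proof (rule ccontr)
    assume "\<not> 2 \<le> card {w \<in> {x1, x2, x3}. EG v w}"
    from not_two_of_three[where E=EG and v=v and x=x1 and y=x2 and z=x3, OF this d] show False using nb v by blast
  qed
qed

lemma TC_H_crit:
  assumes e: "EH x1 x2" "EH x1 x3" "EH x2 x3"
    and nb: "\<And>g. g \<in> VH \<Longrightarrow> \<not> EH g x1 \<Longrightarrow> \<not> EH g x2 \<Longrightarrow> False"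
            "\<And>g. g \<in> VH \<Longrightarrow> \<not> EH g x1 \<Longrightarrow> \<not> EH g x3 \<Longrightarrow> False"
            "\<And>g. g \<in> VH \<Longrightarrow> \<not> EH g x2 \<Longrightarrow> \<not> EH g x3 \<Longrightarrow> False"
  shows "triangle_centered VH EH"
  unfolding triangle_centered_def
proof (intro bexI conjI ballI)
  show "EH x1 x2" "EH x2 x3" "EH x1 x3" using e by auto
  show "x1 \<in> VH" "x2 \<in> VH" "x3 \<in> VH" using e VH1 VH2 by blast+
  fix v assume v: "v \<in> VH"
  have d: "x1 \<noteq> x2" "x1 \<noteq> x3" "x2 \<noteq> x3" using e by auto
  show "2 \<le> card {w \<in> {x1, x2, x3}. EH v w}"
  proof (rule ccontr)
    assume "\<not> 2 \<le> card {w \<in> {x1, x2, x3}. EH v w}"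
    from not_two_of_three[where E=EH and v=v and x=x1 and y=x2 and z=x3, OF this d] show False using nb v by blast
  qed
qed

lemma P3_TC:
  assumes v: "vd P A" and c: "card P \<le> 3"
  shows "triangle_centered VG EG \<and> triangle_centered VH EH"
proof -
  obtain x1 y1 x2 y2 x3 y3 where Peq: "P = {(x1,y1),(x2,y2),(x3,y3)}"
     and e: "EG x1 x2" "EG x1 x3" "EG x2 x3" "EH y1 y2" "EH y1 y3" "EH y2 y3"
    using P3struct[OF v c] by blast
  have yV: "y1 \<in> VH" "y2 \<in> VH" "y3 \<in> VH" using e VH1 VH2 by blast+
  have xV: "x1 \<in> VG" "x2 \<in> VG" "x3 \<in> VG" using e VG1 VG2 by blast+
  have "triangle_centered VG EG"
  proof (rule TC_G_crit[OF e(1-3)])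
    fix g assume g: "g \<in> VG" "\<not> EG g x1" "\<not> EG g x2"
    from vcov[OF v g(1) yV(3)] show False using g Peq by auto
  next
    fix g assume g: "g \<in> VG" "\<not> EG g x1" "\<not> EG g x3"
    from vcov[OF v g(1) yV(2)] show False using g Peq by auto
  next
    fix g assume g: "g \<in> VG" "\<not> EG g x2" "\<not> EG g x3"
    from vcov[OF v g(1) yV(1)] show False using g Peq by auto
  qed
  moreover have "triangle_centered VH EH"
  proof (rule TC_H_crit[OF e(4-6)])
    fix g assume g: "g \<in> VH" "\<not> EH g y1" "\<not> EH g y2"
    from vcov[OF v xV(3) g(1)] show False using g Peq by auto
  next
    fix g assume g: "g \<in> VH" "\<not> EH g y1" "\<not> EH g y3"
    from vcov[OF v xV(2) g(1)] show False using g Peq by auto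
  next
    fix g assume g: "g \<in> VH" "\<not> EH g y2" "\<not> EH g y3"
    from vcov[OF v xV(1) g(1)] show False using g Peq by auto
  qed
  ultimately show ?thesis by blast
qed

end


lemma card2ins: "finite S \<Longrightarrow> a \<notin> S \<Longrightarrow> b \<notin> insert a S \<Longrightarrow> card (insert b (insert a S)) = card S + 2"
  by simp

context tg
begin

lemma row_lemma:
  assumes v: "vd P A" and x: "x \<in> VG" and A: "\<forall>a\<in>A. fst a = x"
  shows "card VH + 2 \<le> card P" and "card P < 2 * card VH + 2 \<Longrightarrow> universal VG EG x"
proof -
  have row: "{x} \<times> VH \<subseteq> P"
  proof
    fix p assume "p \<in> {x} \<times> VH"
    then obtain h where p: "p = (x,h)" "h \<in> VH" by blast
    have "(x,h) \<in> P"
    proof (rule vin[OF v x p(2)])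
      fix x' y' assume "(x',y') \<in> A" "EG x x'" "EH h y'"
      thus False using A by auto
    qed
    thus "p \<in> P" using p by simp
  qed
  obtain g1 h1 g2 h2 where e: "(g1,h1) \<in> P" "(g2,h2) \<in> P" "EG x g1" "EG x g2" "h1 \<noteq> h2"
    using row_trick[OF v x] by blast
  have n1: "(g1,h1) \<notin> {x} \<times> VH" "(g2,h2) \<notin> insert (g1,h1) ({x} \<times> VH)" using e by auto
  have "card (insert (g2,h2) (insert (g1,h1) ({x} \<times> VH))) = card VH + 2"
    using n1 finH by (simp add: card_cartesian_product)
  moreover have "insert (g2,h2) (insert (g1,h1) ({x} \<times> VH)) \<subseteq> P" using row e by auto
  ultimately show c1: "card VH + 2 \<le> card P" using card_le_P[OF v] by metis
  assume c: "card P < 2 * card VH + 2"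
  show "universal VG EG x" unfolding universal_def
  proof (intro conjI ballI impI x)
    fix g0 assume g0: "g0 \<in> VG" "g0 \<noteq> x"
    show "EG x g0"
    proof (rule ccontr)
      assume ng: "\<not> EG x g0"
      have row2: "{g0} \<times> VH \<subseteq> P"
      proof
        fix p assume "p \<in> {g0} \<times> VH"
        then obtain h where p: "p = (g0,h)" "h \<in> VH" by blast
        have "(g0,h) \<in> P"
        proof (rule vin[OF v g0(1) p(2)])
          fix x' y' assume "(x',y') \<in> A" "EG g0 x'" "EH h y'"
          hence "EG g0 x" using A by auto
          thus False using ng symG[of g0 x] by blast
        qed
        thus "p \<in> P" using p by simp
      qed
      have "{x,g0} \<times> VH = {x} \<times> VH \<union> {g0} \<times> VH" by blast
      hence sub: "insert (g2,h2) (insert (g1,h1) ({x,g0} \<times> VH)) \<subseteq> P" using row row2 e by auto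
      have "g1 \<noteq> g0" "g2 \<noteq> g0" "g1 \<noteq> x" "g2 \<noteq> x" using e ng by auto
      hence n2: "(g1,h1) \<notin> {x,g0} \<times> VH" "(g2,h2) \<notin> insert (g1,h1) ({x,g0} \<times> VH)" using e by auto
      have "card ({x,g0} \<times> VH) = 2 * card VH" using g0 finH by (simp add: card_cartesian_product)
      moreover have "card (insert (g2,h2) (insert (g1,h1) ({x,g0} \<times> VH))) = card ({x,g0} \<times> VH) + 2"
        using n2 finH by (intro card2ins) auto
      ultimately have "card (insert (g2,h2) (insert (g1,h1) ({x,g0} \<times> VH))) = 2 * card VH + 2" by simp
      with card_le_P[OF v sub] c show False by simp
    qed
  qed
qed

lemma col_lemma:
  assumes v: "vd P A" and y: "y \<in> VH" and A: "\<forall>a\<in>A. snd a = y"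
  shows "card VG + 2 \<le> card P" and "card P < 2 * card VG + 2 \<Longrightarrow> universal VH EH y"
proof -
  have col: "VG \<times> {y} \<subseteq> P"
  proof
    fix p assume "p \<in> VG \<times> {y}"
    then obtain g where p: "p = (g,y)" "g \<in> VG" by blast
    have "(g,y) \<in> P"
    proof (rule vin[OF v p(2) y])
      fix x' y' assume "(x',y') \<in> A" "EG g x'" "EH y y'"
      thus False using A by auto
    qed
    thus "p \<in> P" using p by simp
  qed
  obtain g1 h1 g2 h2 where e: "(g1,h1) \<in> P" "(g2,h2) \<in> P" "EH y h1" "EH y h2" "g1 \<noteq> g2"
    using col_trick[OF v y] by blast
  have n1: "(g1,h1) \<notin> VG \<times> {y}" "(g2,h2) \<notin> insert (g1,h1) (VG \<times> {y})" using e by auto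
  have "card (insert (g2,h2) (insert (g1,h1) (VG \<times> {y}))) = card VG + 2"
    using n1 finG by (simp add: card_cartesian_product)
  moreover have "insert (g2,h2) (insert (g1,h1) (VG \<times> {y})) \<subseteq> P" using col e by auto
  ultimately show c1: "card VG + 2 \<le> card P" using card_le_P[OF v] by metis
  assume c: "card P < 2 * card VG + 2"
  show "universal VH EH y" unfolding universal_def
  proof (intro conjI ballI impI y)
    fix g0 assume g0: "g0 \<in> VH" "g0 \<noteq> y"
    show "EH y g0"
    proof (rule ccontr)
      assume ng: "\<not> EH y g0"
      have col2: "VG \<times> {g0} \<subseteq> P"
      proof
        fix p assume "p \<in> VG \<times> {g0}"
        then obtain h where p: "p = (h,g0)" "h \<in> VG" by blast
        have "(h,g0) \<in> P"
        proof (rule vin[OF v p(2) g0(1)])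
          fix x' y' assume "(x',y') \<in> A" "EG h x'" "EH g0 y'"
          hence "EH g0 y" using A by auto
          thus False using ng symH[of g0 y] by blast
        qed
        thus "p \<in> P" using p by simp
      qed
      have "VG \<times> {y,g0} = VG \<times> {y} \<union> VG \<times> {g0}" by blast
      hence sub: "insert (g2,h2) (insert (g1,h1) (VG \<times> {y,g0})) \<subseteq> P" using col col2 e by auto
      have "h1 \<noteq> g0" "h2 \<noteq> g0" "h1 \<noteq> y" "h2 \<noteq> y" using e ng by auto
      hence n2: "(g1,h1) \<notin> VG \<times> {y,g0}" "(g2,h2) \<notin> insert (g1,h1) (VG \<times> {y,g0})" using e by auto
      have "card {y,g0} = 2" using g0 by simp
      hence "card (VG \<times> {y,g0}) = card VG * 2" by (simp add: card_cartesian_product)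
      moreover have "card (insert (g2,h2) (insert (g1,h1) (VG \<times> {y,g0}))) = card (VG \<times> {y,g0}) + 2"
        using n2 finG by (intro card2ins) auto
      ultimately have "card (insert (g2,h2) (insert (g1,h1) (VG \<times> {y,g0}))) = 2 * card VG + 2" by simp
      with card_le_P[OF v sub] c show False by simp
    qed
  qed
qed

lemma cross1:
  assumes v: "vd P A" and A: "A = {(x,y)}"
  shows "card VG + card VH \<le> card P"
proof -
  have xy: "(x,y) \<in> P" using vAP[OF v] A by auto
  hence xV: "x \<in> VG" "y \<in> VH" using vPV[OF v] by auto
  let ?S = "{x} \<times> VH \<union> (VG - {x}) \<times> {y}"
  have S: "?S \<subseteq> P"
  proof
    fix p assume p: "p \<in> ?S"
    then obtain g h where gh: "p = (g,h)" "g \<in> VG" "h \<in> VH" "g = x \<or> h = y" using xV by blast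
    have "(g,h) \<in> P"
    proof (rule vin[OF v gh(2,3)])
      fix x' y' assume "(x',y') \<in> A" "EG g x'" "EH h y'"
      thus False using A gh(4) by auto
    qed
    thus "p \<in> P" using gh by simp
  qed
  obtain ex ey where e: "(ex,ey) \<in> P" "EG x ex" "EH y ey" using vcov[OF v xV] by blast
  have ne: "(ex,ey) \<notin> ?S" using e by auto
  have "card ?S = card VH + (card VG - 1)"
    using xV finG finH by (subst card_Un_disjoint) (auto simp: card_cartesian_product)
  hence "card (insert (ex,ey) ?S) = card VH + card VG"
    using ne finG finH cardG2 by simp
  moreover have "insert (ex,ey) ?S \<subseteq> P" using S e by auto
  moreover have "card (insert (ex,ey) ?S) \<le> card P" using card_le_P[OF v] calculation(2) by blast
  ultimately show ?thesis by linarith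
qed

lemma cross2:
  assumes v: "vd P A" and A: "A = {(x,y)}" and g0: "g0 \<in> VG" "g0 \<noteq> x" "\<not> EG x g0"
  shows "2 * card VH + card VG \<le> card P + 1"
proof -
  have xy: "(x,y) \<in> P" using vAP[OF v] A by auto
  hence xV: "x \<in> VG" "y \<in> VH" using vPV[OF v] by auto
  let ?S = "{x,g0} \<times> VH \<union> (VG - {x,g0}) \<times> {y}"
  have S: "?S \<subseteq> P"
  proof
    fix p assume p: "p \<in> ?S"
    then obtain g h where gh: "p = (g,h)" "g \<in> VG" "h \<in> VH" "g = x \<or> g = g0 \<or> h = y"
      using xV g0 by blast
    have "(g,h) \<in> P"
    proof (rule vin[OF v gh(2,3)])
      fix x' y' assume "(x',y') \<in> A" "EG g x'" "EH h y'"
      hence "EG g x" "EH h y" using A by auto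
      thus False using gh(4) g0(3) symG[of g x] by auto
    qed
    thus "p \<in> P" using gh by simp
  qed
  obtain ex ey where e: "(ex,ey) \<in> P" "EG x ex" "EH y ey" using vcov[OF v xV] by blast
  have ne: "(ex,ey) \<notin> ?S" using e g0 by auto
  have c1: "card ({x,g0} \<times> VH) = 2 * card VH" using g0 finH by (simp add: card_cartesian_product)
  have c2: "card ((VG - {x,g0}) \<times> {y}) = card VG - 2"
    using g0 xV finG by (simp add: card_cartesian_product card_Diff_subset)
  have "card ?S = 2 * card VH + (card VG - 2)"
    using c1 c2 finG finH by (subst card_Un_disjoint) auto
  hence "card (insert (ex,ey) ?S) = 2 * card VH + (card VG - 2) + 1"
    using ne finG finH by simp
  moreover have "insert (ex,ey) ?S \<subseteq> P" using S e by auto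
  moreover have "card (insert (ex,ey) ?S) \<le> card P" using card_le_P[OF v] calculation(2) by blast
  ultimately show ?thesis using cardG2 by linarith
qed

lemma A_empty: "vd P {} \<Longrightarrow> P = VG \<times> VH"
proof
  assume v: "vd P {}"
  show "P \<subseteq> VG \<times> VH" using vPV[OF v] .
  show "VG \<times> VH \<subseteq> P"
  proof
    fix p assume "p \<in> VG \<times> VH"
    then obtain g h where "p = (g,h)" "g \<in> VG" "h \<in> VH" by blast
    thus "p \<in> P" using vin[OF v, of g h] by auto
  qed
qed

lemma nm_bound: "2 \<le> (n::nat) \<Longrightarrow> 2 \<le> m \<Longrightarrow> n * m \<le> k \<Longrightarrow> 2 * n \<le> k \<and> 2 * m \<le> k"
proof -
  assume a: "2 \<le> n" "2 \<le> m" "n * m \<le> k"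
  have "2 * n \<le> m * n" by (rule mult_le_mono1[OF a(2)])
  moreover have "2 * m \<le> n * m" by (rule mult_le_mono1[OF a(1)])
  moreover have "m * n = n * m" by simp
  ultimately show ?thesis using a(3) by linarith
qed

lemma LB4: "vd P A \<Longrightarrow> 4 \<le> card P + card A"
proof -
  assume v: "vd P A"
  show ?thesis
  proof (cases "A = {}")
    case True
    hence "P = VG \<times> VH" using A_empty v by blast
    hence "card P = card VG * card VH" by (simp add: card_cartesian_product)
    moreover have "2 * 2 \<le> card VG * card VH" using cardG2 cardH2 by (rule mult_le_mono)
    ultimately show ?thesis by simp
  next
    case False
    hence "1 \<le> card A" using vfinA[OF v] by (simp add: Suc_le_eq card_gt_0_iff)
    thus ?thesis using P_ge3[OF v] by simp
  qed
qed

end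


context tg
begin

lemma injP3:
  assumes Peq: "P = {(x1,y1),(x2,y2),(x3,y3)}"
    and e: "EG x1 x2" "EG x1 x3" "EG x2 x3" "EH y1 y2" "EH y1 y3" "EH y2 y3"
  shows "\<forall>p\<in>P. \<forall>q\<in>P. fst p = fst q \<longrightarrow> p = q" "\<forall>p\<in>P. \<forall>q\<in>P. snd p = snd q \<longrightarrow> p = q"
proof -
  have d: "x1 \<noteq> x2" "x1 \<noteq> x3" "x2 \<noteq> x3" "y1 \<noteq> y2" "y1 \<noteq> y3" "y2 \<noteq> y3" using e by auto
  show "\<forall>p\<in>P. \<forall>q\<in>P. fst p = fst q \<longrightarrow> p = q" using d Peq by auto
  show "\<forall>p\<in>P. \<forall>q\<in>P. snd p = snd q \<longrightarrow> p = q" using d Peq by auto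
qed

lemma L1:
  assumes v: "vd P A" and c: "card P + card A \<le> 5"
  shows "card VG = 2 \<and> card VH = 2"
proof (cases "A = {}")
  case True
  hence "P = VG \<times> VH" using A_empty v by blast
  hence "card VG * card VH \<le> 5" using c by (simp add: card_cartesian_product)
  from nm_bound[OF cardG2 cardH2 this] cardG2 cardH2 show ?thesis by linarith
next
  case False
  have A1: "1 \<le> card A" using False vfinA[OF v] by (simp add: Suc_le_eq card_gt_0_iff)
  have P3: "3 \<le> card P" using P_ge3[OF v] .
  have "card A = 1 \<or> card A = 2" using c A1 P3 by linarith
  thus ?thesis
  proof
    assume "card A = 1"
    then obtain a where "A = {a}" by (auto simp: card_1_singleton_iff)
    moreover obtain x y where "a = (x,y)" by (cases a)
    ultimately have "A = {(x,y)}" by simp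
    from cross1[OF v this] have "card VG + card VH \<le> card P" .
    thus ?thesis using c A1 cardG2 cardH2 by linarith
  next
    assume cA: "card A = 2"
    hence cP: "card P \<le> 3" using c by simp
    obtain x1 y1 x2 y2 x3 y3 where Peq: "P = {(x1,y1),(x2,y2),(x3,y3)}"
      and e: "EG x1 x2" "EG x1 x3" "EG x2 x3" "EH y1 y2" "EH y1 y3" "EH y2 y3"
      using P3struct[OF v cP] by blast
    note inj = injP3[OF Peq e]
    obtain a a' where aa: "A = {a,a'}" "a \<noteq> a'" using cA by (meson card_2_iff)
    have aP: "a \<in> P" "a' \<in> P" using aa vAP[OF v] by auto
    have pV: "fst a \<in> VG" "snd a' \<in> VH" using aP vPV[OF v] by auto
    have False
    proof (cases "(fst a, snd a') \<in> P")
      case True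
      have "(fst a, snd a') = a" using inj(1) True aP(1) by auto
      hence "snd a' = snd a" by (metis snd_conv)
      hence "a' = a" using inj(2) aP by blast
      thus False using aa(2) by simp
    next
      case False
      from vdom[OF v pV False] obtain x y where "(x,y) \<in> A" "EG (fst a) x" "EH (snd a') y" by blast
      thus False using aa by auto
    qed
    thus ?thesis ..
  qed
qed

definition C6 where
  "C6 \<longleftrightarrow> (card VG = 2 \<and> card VH = 2)
     \<or> ((\<exists>u1 u2. u1 \<noteq> u2 \<and> universal VG EG u1 \<and> universal VG EG u2)
        \<and> (\<exists>u1 u2. u1 \<noteq> u2 \<and> universal VH EH u1 \<and> universal VH EH u2) \<and> (3 \<le> card VG \<or> 3 \<le> card VH))
     \<or> (card VG = 2 \<and> 3 \<le> card VH \<and> (\<exists>u. universal VH EH u))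
     \<or> (card VH = 2 \<and> 3 \<le> card VG \<and> (\<exists>u. universal VG EG u))
     \<or> (triangle_centered VG EG \<and> triangle_centered VH EH)"

lemma C6_small:
  assumes "card VG \<le> 3" "card VH \<le> 3" "card VG = 2 \<or> card VH = 2"
  shows C6
proof -
  have "(card VG = 2 \<and> card VH = 2) \<or> (card VG = 2 \<and> card VH = 3) \<or> (card VH = 2 \<and> card VG = 3)"
    using assms cardG2 cardH2 by linarith
  moreover have "\<exists>u. universal VH EH u" if "card VH \<le> 3" using Hs.card3_univ[OF neH that] .
  moreover have "\<exists>u. universal VG EG u" if "card VG \<le> 3" using Gs.card3_univ[OF neG that] .
  ultimately show ?thesis unfolding C6_def by fastforce
qed

lemma Qsub:
  assumes v: "vd P A" and A: "A = {(x1,y1),(x2,y2)}" and d: "x1 \<noteq> x2" "y1 \<noteq> y2"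
  shows "{(x1,y1),(x2,y2),(x1,y2),(x2,y1)} \<subseteq> P" "card {(x1,y1),(x2,y2),(x1,y2),(x2,y1)} = 4"
proof -
  have m: "x1 \<in> VG" "x2 \<in> VG" "y1 \<in> VH" "y2 \<in> VH" using vAP[OF v] vPV[OF v] A by auto
  have "(x1,y2) \<in> P"
  proof (rule vin[OF v m(1) m(4)])
    fix x y assume "(x,y) \<in> A" "EG x1 x" "EH y2 y" thus False using A by auto
  qed
  moreover have "(x2,y1) \<in> P"
  proof (rule vin[OF v m(2) m(3)])
    fix x y assume "(x,y) \<in> A" "EG x2 x" "EH y1 y" thus False using A by auto
  qed
  ultimately show "{(x1,y1),(x2,y2),(x1,y2),(x2,y1)} \<subseteq> P" using vAP[OF v] A by auto
  show "card {(x1,y1),(x2,y2),(x1,y2),(x2,y1)} = 4" using d by auto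
qed

lemma L2:
  assumes v: "vd P A" and c: "card P + card A \<le> 6"
  shows C6
proof (cases "A = {}")
  case True
  hence "P = VG \<times> VH" using A_empty v by blast
  hence nm: "card VG * card VH \<le> 6" using c by (simp add: card_cartesian_product)
  from nm_bound[OF cardG2 cardH2 this] have le3: "card VG \<le> 3" "card VH \<le> 3" by auto
  have "card VG = 2 \<or> card VH = 2"
  proof (rule ccontr)
    assume "\<not> ?thesis"
    hence "card VG = 3" "card VH = 3" using le3 cardG2 cardH2 by auto
    thus False using nm by simp
  qed
  thus ?thesis using C6_small le3 by blast
next
  case False
  have A1: "1 \<le> card A" using False vfinA[OF v] by (simp add: Suc_le_eq card_gt_0_iff)
  have P3: "3 \<le> card P" using P_ge3[OF v] .
  have "card A = 1 \<or> card A = 2 \<or> card A = 3" using c A1 P3 by linarith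
  moreover {
    assume "card A = 1"
    then obtain a where "A = {a}" by (auto simp: card_1_singleton_iff)
    moreover obtain x y where "a = (x,y)" by (cases a)
    ultimately have "A = {(x,y)}" by simp
    from cross1[OF v this] have "card VG + card VH \<le> card P" .
    hence "card VG \<le> 3" "card VH \<le> 3" "card VG = 2 \<or> card VH = 2"
      using c A1 cardG2 cardH2 by linarith+
    hence ?thesis by (rule C6_small)
  } moreover {
    assume "card A = 3"
    hence "card P \<le> 3" using c by simp
    hence ?thesis using P3_TC[OF v] unfolding C6_def by blast
  } moreover {
    assume cA: "card A = 2"
    hence cP: "card P \<le> 4" using c by simp
    obtain a1 a2 where aa: "A = {a1,a2}" "a1 \<noteq> a2" using cA by (meson card_2_iff)
    obtain x1 y1 where a1: "a1 = (x1,y1)" by (cases a1)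
    obtain x2 y2 where a2: "a2 = (x2,y2)" by (cases a2)
    have m: "x1 \<in> VG" "x2 \<in> VG" "y1 \<in> VH" "y2 \<in> VH" using vAP[OF v] vPV[OF v] aa a1 a2 by auto
    have ?thesis
    proof (cases "x1 = x2")
      case True
      have all: "\<forall>a\<in>A. fst a = x1" using aa a1 a2 True by auto
      note r = row_lemma[OF v m(1) all]
      have "card VH = 2" using r(1) cP cardH2 by linarith
      moreover have "universal VG EG x1" using r(2) cP cardH2 by linarith
      ultimately show ?thesis unfolding C6_def using cardG2 by (cases "card VG = 2") auto
    next
      case x12: False
      show ?thesis
      proof (cases "y1 = y2")
        case True
        have all: "\<forall>a\<in>A. snd a = y1" using aa a1 a2 True by auto
        note r = col_lemma[OF v m(3) all]
        have "card VG = 2" using r(1) cP cardG2 by linarith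
        moreover have "universal VH EH y1" using r(2) cP cardG2 by linarith
        ultimately show ?thesis unfolding C6_def using cardH2 by (cases "card VH = 2") auto
      next
        case y12: False
        have Aeq: "A = {(x1,y1),(x2,y2)}" using aa a1 a2 by simp
        note q = Qsub[OF v Aeq x12 y12]
        have Peq: "P = {(x1,y1),(x2,y2),(x1,y2),(x2,y1)}"
          using card_subset_eq[OF vfinP[OF v] q(1)] q(2) cP card_le_P[OF v q(1)] by simp
        obtain x y where xy: "(x,y) \<in> P" "EG x1 x" "EH y1 y" using vcov[OF v m(1) m(3)] by blast
        hence "(x,y) = (x2,y2)" using Peq by auto
        hence e: "EG x1 x2" "EH y1 y2" using xy by auto
        have u1: "universal VG EG x1" unfolding universal_def
        proof (intro conjI ballI impI m)
          fix g assume g: "g \<in> VG" "g \<noteq> x1"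
          show "EG x1 g"
          proof (cases "g = x2")
            case True thus ?thesis using e by simp
          next
            case False
            hence "(g,y2) \<notin> P" using Peq g x12 y12 by auto
            from vdom[OF v g(1) m(4) this] obtain x y where "(x,y) \<in> A" "EG g x" "EH y2 y" by blast
            hence "EG g x1" using Aeq by auto
            thus ?thesis using symG by blast
          qed
        qed
        have u2: "universal VG EG x2" unfolding universal_def
        proof (intro conjI ballI impI m)
          fix g assume g: "g \<in> VG" "g \<noteq> x2"
          show "EG x2 g"
          proof (cases "g = x1")
            case True thus ?thesis using e symG by blast
          next
            case False
            hence "(g,y1) \<notin> P" using Peq g x12 y12 by auto
            from vdom[OF v g(1) m(3) this] obtain x y where "(x,y) \<in> A" "EG g x" "EH y1 y" by blast
            hence "EG g x2" using Aeq by auto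
            thus ?thesis using symG by blast
          qed
        qed
        have w1: "universal VH EH y1" unfolding universal_def
        proof (intro conjI ballI impI m)
          fix h assume h: "h \<in> VH" "h \<noteq> y1"
          show "EH y1 h"
          proof (cases "h = y2")
            case True thus ?thesis using e by simp
          next
            case False
            hence "(x2,h) \<notin> P" using Peq h x12 y12 by auto
            from vdom[OF v m(2) h(1) this] obtain x y where "(x,y) \<in> A" "EG x2 x" "EH h y" by blast
            hence "EH h y1" using Aeq by auto
            thus ?thesis using symH by blast
          qed
        qed
        have w2: "universal VH EH y2" unfolding universal_def
        proof (intro conjI ballI impI m)
          fix h assume h: "h \<in> VH" "h \<noteq> y2"
          show "EH y2 h"
          proof (cases "h = y1")
            case True thus ?thesis using e symH by blast
          next
            case False
            hence "(x1,h) \<notin> P" using Peq h x12 y12 by auto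
            from vdom[OF v m(1) h(1) this] obtain x y where "(x,y) \<in> A" "EG x1 x" "EH h y" by blast
            hence "EH h y2" using Aeq by auto
            thus ?thesis using symH by blast
          qed
        qed
        show ?thesis unfolding C6_def using u1 u2 w1 w2 x12 y12 cardG2 cardH2
          by (cases "card VG = 2 \<and> card VH = 2") auto
      qed
    qed
  }
  ultimately show ?thesis by blast
qed

end


context tg
begin

lemma R3row:
  assumes v: "vd P A" and A: "A = {(x,y1),(x,y2),(x,y3)}" and Pb: "P = insert b A"
  shows False
proof -
  obtain gb hb where b: "b = (gb,hb)" by (cases b)
  have m: "x \<in> VG" "y1 \<in> VH" "y2 \<in> VH" "y3 \<in> VH" using vAP[OF v] vPV[OF v] A by auto
  have nbr: "EG x gb \<and> EH y hb" if y: "y \<in> {y1,y2,y3}" for y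
  proof -
    have "y \<in> VH" using y m by auto
    from vcov[OF v m(1) this] obtain p q where pq: "(p,q) \<in> P" "EG x p" "EH y q" by blast
    hence "(p,q) = b" using Pb A by auto
    thus ?thesis using pq b by simp
  qed
  have hb: "hb \<in> VH" using nbr[of y1] VH2 by auto
  have "(x,hb) \<in> P"
  proof (rule vin[OF v m(1) hb])
    fix p q assume "(p,q) \<in> A" "EG x p" "EH hb q" thus False using A by auto
  qed
  hence "(x,hb) = b \<or> (x,hb) \<in> A" using Pb by auto
  thus False
  proof
    assume "(x,hb) = b" thus False using nbr[of y1] b by auto
  next
    assume "(x,hb) \<in> A"
    hence "hb \<in> {y1,y2,y3}" using A by auto
    thus False using nbr[of hb] by auto
  qed
qed

lemma R3col:
  assumes v: "vd P A" and A: "A = {(x1,y),(x2,y),(x3,y)}" and Pb: "P = insert b A"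
  shows False
proof -
  obtain gb hb where b: "b = (gb,hb)" by (cases b)
  have m: "y \<in> VH" "x1 \<in> VG" "x2 \<in> VG" "x3 \<in> VG" using vAP[OF v] vPV[OF v] A by auto
  have nbr: "EG x gb \<and> EH y hb" if x: "x \<in> {x1,x2,x3}" for x
  proof -
    have "x \<in> VG" using x m by auto
    from vcov[OF v this m(1)] obtain p q where pq: "(p,q) \<in> P" "EG x p" "EH y q" by blast
    hence "(p,q) = b" using Pb A by auto
    thus ?thesis using pq b by simp
  qed
  have gb: "gb \<in> VG" using nbr[of x1] VG2 by auto
  have "(gb,y) \<in> P"
  proof (rule vin[OF v gb m(1)])
    fix p q assume "(p,q) \<in> A" "EG gb p" "EH y q" thus False using A by auto
  qed
  hence "(gb,y) = b \<or> (gb,y) \<in> A" using Pb by auto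
  thus False
  proof
    assume "(gb,y) = b" thus False using nbr[of x1] b by auto
  next
    assume "(gb,y) \<in> A"
    hence "gb \<in> {x1,x2,x3}" using A by auto
    thus False using nbr[of gb] by auto
  qed
qed

lemma R2row:
  assumes v: "vd P A" and A: "A = {(x,y1),(x,y2),(x3,y3)}" and Pb: "P = insert b A"
    and d: "x3 \<noteq> x" "y3 \<noteq> y1" "y3 \<noteq> y2"
  shows False
proof -
  have m: "x \<in> VG" "y3 \<in> VH" using vAP[OF v] vPV[OF v] A by auto
  have inP: "(x,y3) \<in> P"
  proof (rule vin[OF v m])
    fix p q assume "(p,q) \<in> A" "EG x p" "EH y3 q" thus False using A by auto
  qed
  have "(x,y3) \<notin> A" using A d by auto
  hence bb: "b = (x,y3)" using inP Pb by auto
  from vcov[OF v m] obtain p q where "(p,q) \<in> P" "EG x p" "EH y3 q" by blast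
  thus False using Pb A bb by auto
qed

lemma R2col:
  assumes v: "vd P A" and A: "A = {(x1,y),(x2,y),(x3,y3)}" and Pb: "P = insert b A"
    and d: "y3 \<noteq> y" "x3 \<noteq> x1" "x3 \<noteq> x2"
  shows False
proof -
  have m: "x3 \<in> VG" "y \<in> VH" using vAP[OF v] vPV[OF v] A by auto
  have inP: "(x3,y) \<in> P"
  proof (rule vin[OF v m])
    fix p q assume "(p,q) \<in> A" "EG x3 p" "EH y q" thus False using A by auto
  qed
  have "(x3,y) \<notin> A" using A d by auto
  hence bb: "b = (x3,y)" using inP Pb by auto
  from vcov[OF v m] obtain p q where "(p,q) \<in> P" "EG x3 p" "EH y q" by blast
  thus False using Pb A bb by auto
qed

lemma RL:
  assumes v: "vd P A" and A: "A = {(x,y),(x,y'),(x',y)}" and Pb: "P = insert b A"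
    and d: "x' \<noteq> x" "y' \<noteq> y"
  shows "universal VG EG x"
proof -
  obtain gb hb where b: "b = (gb,hb)" by (cases b)
  have m: "x \<in> VG" "y \<in> VH" "y' \<in> VH" "x' \<in> VG" using vAP[OF v] vPV[OF v] A by auto
  from vcov[OF v m(1,2)] obtain p q where pq: "(p,q) \<in> P" "EG x p" "EH y q" by blast
  hence "(p,q) = b" using Pb A by auto
  hence bx: "EG x gb" "EH y hb" using pq b by auto
  show ?thesis unfolding universal_def
  proof (intro conjI ballI impI m(1))
    fix g0 assume g0: "g0 \<in> VG" "g0 \<noteq> x"
    show "EG x g0"
    proof (rule ccontr)
      assume ng: "\<not> EG x g0"
      have ng': "\<not> EG g0 x" using ng symG[of g0 x] by blast
      have "(g0,y) \<in> P"
      proof (rule vin[OF v g0(1) m(2)])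
        fix p q assume "(p,q) \<in> A" "EG g0 p" "EH y q" thus False using A ng' by auto
      qed
      hence "(g0,y) = b \<or> (g0,y) \<in> A" using Pb by auto
      hence "g0 = x'"
      proof
        assume "(g0,y) = b" hence "gb = g0" using b by simp
        thus ?thesis using bx ng by simp
      next
        assume "(g0,y) \<in> A" thus ?thesis using A g0 by auto
      qed
      hence nx: "\<not> EG x x'" using ng by simp
      from vcov[OF v m(1,3)] obtain p q where pq: "(p,q) \<in> P" "EG x p" "EH y' q" by blast
      hence "(p,q) = b" using Pb A nx by auto
      hence hb: "EH y' hb" using pq b by auto
      have hbV: "hb \<in> VH" using VH2[OF hb] .
      have "(x,hb) \<in> P"
      proof (rule vin[OF v m(1) hbV])
        fix p q assume "(p,q) \<in> A" "EG x p" "EH hb q" thus False using A nx by auto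
      qed
      hence "(x,hb) = b \<or> (x,hb) \<in> A" using Pb by auto
      thus False
      proof
        assume "(x,hb) = b" hence "gb = x" using b by simp
        thus False using bx by simp
      next
        assume "(x,hb) \<in> A"
        hence "hb = y \<or> hb = y'" using A d by auto
        thus False using bx hb by auto
      qed
    qed
  qed
qed

lemma RT_edge:
  assumes v: "vd P A" and A: "A = {(x1,y1),(x2,y2),(x3,y3)}" and Pb: "P = insert b A"
    and dx: "x1 \<noteq> x2" "x1 \<noteq> x3" "x2 \<noteq> x3" and dy: "y1 \<noteq> y2" "y1 \<noteq> y3" "y2 \<noteq> y3"
  shows "EG x1 x2 \<and> EH y1 y2"
proof
  have m: "x1 \<in> VG" "x2 \<in> VG" "x3 \<in> VG" "y1 \<in> VH" "y2 \<in> VH" "y3 \<in> VH"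
    using vAP[OF v] vPV[OF v] A by auto
  show "EG x1 x2"
  proof (cases "(x1,y3) = b")
    case False
    have "(x1,y3) \<notin> P" using False Pb A dx dy by auto
    from vdom[OF v m(1) m(6) this] obtain p q where "(p,q) \<in> A" "EG x1 p" "EH y3 q" by blast
    thus ?thesis using A by auto
  next
    case True
    hence "(x2,y3) \<notin> P" using Pb A dx dy by auto
    from vdom[OF v m(2) m(6) this] obtain p q where "(p,q) \<in> A" "EG x2 p" "EH y3 q" by blast
    hence "EG x2 x1" using A by auto
    thus ?thesis using symG by blast
  qed
  show "EH y1 y2"
  proof (cases "(x3,y1) = b")
    case False
    have "(x3,y1) \<notin> P" using False Pb A dx dy by auto
    from vdom[OF v m(3) m(4) this] obtain p q where "(p,q) \<in> A" "EG x3 p" "EH y1 q" by blast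
    thus ?thesis using A by auto
  next
    case True
    hence "(x3,y2) \<notin> P" using Pb A dx dy by auto
    from vdom[OF v m(3) m(5) this] obtain p q where "(p,q) \<in> A" "EG x3 p" "EH y2 q" by blast
    hence "EH y2 y1" using A by auto
    thus ?thesis using symH by blast
  qed
qed

lemma RT_nobad:
  assumes v: "vd P A" and A: "A = {(x1,y1),(x2,y2),(x3,y3)}" and Pb: "P = insert b A"
    and dy: "y1 \<noteq> y3" "y2 \<noteq> y3" and e: "EG x3 x1"
    and g: "g \<in> VG" "\<not> EG g x1" "\<not> EG g x2"
  shows False
proof -
  have m: "y3 \<in> VH" using vAP[OF v] vPV[OF v] A by auto
  have inP: "(g,y3) \<in> P"
  proof (rule vin[OF v g(1) m])
    fix p q assume "(p,q) \<in> A" "EG g p" "EH y3 q" thus False using A g by auto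
  qed
  have "(g,y3) \<notin> A" using A dy g e by auto
  hence bb: "b = (g,y3)" using inP Pb by auto
  from vcov[OF v g(1) m] obtain p q where "(p,q) \<in> P" "EG g p" "EH y3 q" by blast
  thus False using Pb A bb g by auto
qed

lemma RT_nobadH:
  assumes v: "vd P A" and A: "A = {(x1,y1),(x2,y2),(x3,y3)}" and Pb: "P = insert b A"
    and dx: "x1 \<noteq> x3" "x2 \<noteq> x3" and e: "EH y3 y1"
    and h: "h \<in> VH" "\<not> EH h y1" "\<not> EH h y2"
  shows False
proof -
  have m: "x3 \<in> VG" using vAP[OF v] vPV[OF v] A by auto
  have inP: "(x3,h) \<in> P"
  proof (rule vin[OF v m h(1)])
    fix p q assume "(p,q) \<in> A" "EG x3 p" "EH h q" thus False using A h by auto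
  qed
  have "(x3,h) \<notin> A" using A dx h e by auto
  hence bb: "b = (x3,h)" using inP Pb by auto
  from vcov[OF v m h(1)] obtain p q where "(p,q) \<in> P" "EG x3 p" "EH h q" by blast
  thus False using Pb A bb h by auto
qed

lemma RT:
  assumes v: "vd P A" and A: "A = {(x1,y1),(x2,y2),(x3,y3)}" and Pb: "P = insert b A"
    and dx: "x1 \<noteq> x2" "x1 \<noteq> x3" "x2 \<noteq> x3" and dy: "y1 \<noteq> y2" "y1 \<noteq> y3" "y2 \<noteq> y3"
  shows "triangle_centered VG EG \<and> triangle_centered VH EH"
proof -
  have A2: "A = {(x1,y1),(x3,y3),(x2,y2)}" using A by auto
  have A3: "A = {(x2,y2),(x3,y3),(x1,y1)}" using A by auto
  have A4: "A = {(x2,y2),(x1,y1),(x3,y3)}" using A by auto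
  have A5: "A = {(x3,y3),(x1,y1),(x2,y2)}" using A by auto
  have A6: "A = {(x3,y3),(x2,y2),(x1,y1)}" using A by auto
  have e12: "EG x1 x2 \<and> EH y1 y2" using RT_edge[OF v A Pb dx dy] .
  have e13: "EG x1 x3 \<and> EH y1 y3" using RT_edge[OF v A2 Pb] dx dy by auto
  have e23: "EG x2 x3 \<and> EH y2 y3" using RT_edge[OF v A3 Pb] dx dy by auto
  have s: "EG x3 x1" "EG x2 x1" "EG x3 x2" "EH y3 y1" "EH y2 y1" "EH y3 y2"
    using e12 e13 e23 symG symH by blast+
  have "triangle_centered VG EG"
  proof (rule TC_G_crit)
    show "EG x1 x2" "EG x1 x3" "EG x2 x3" using e12 e13 e23 by auto
  next
    fix g assume "g \<in> VG" "\<not> EG g x1" "\<not> EG g x2"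
    thus False using RT_nobad[OF v A Pb _ _ s(1)] dy by auto
  next
    fix g assume "g \<in> VG" "\<not> EG g x1" "\<not> EG g x3"
    thus False using RT_nobad[OF v A2 Pb _ _ s(2)] dy by auto
  next
    fix g assume "g \<in> VG" "\<not> EG g x2" "\<not> EG g x3"
    thus False using RT_nobad[OF v A3 Pb _ _ e12[THEN conjunct1]] dy by auto
  qed
  moreover have "triangle_centered VH EH"
  proof (rule TC_H_crit)
    show "EH y1 y2" "EH y1 y3" "EH y2 y3" using e12 e13 e23 by auto
  next
    fix h assume "h \<in> VH" "\<not> EH h y1" "\<not> EH h y2"
    thus False using RT_nobadH[OF v A Pb _ _ s(4)] dx by auto
  next
    fix h assume "h \<in> VH" "\<not> EH h y1" "\<not> EH h y3"
    thus False using RT_nobadH[OF v A2 Pb _ _ s(5)] dx by auto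
  next
    fix h assume "h \<in> VH" "\<not> EH h y2" "\<not> EH h y3"
    thus False using RT_nobadH[OF v A3 Pb _ _ e12[THEN conjunct2]] dx by auto
  qed
  ultimately show ?thesis by blast
qed

end


context tg
begin

lemma A3_casesX:
  assumes v: "vd P A" and A: "A = {a,a',a''}" and d: "a \<noteq> a'" "a \<noteq> a''" "a' \<noteq> a''"
    and Pb: "P = insert b A" and f: "fst a = fst a'"
  shows "\<exists>u. universal VG EG u"
proof -
  obtain x ya where a: "a = (x,ya)" by (cases a)
  obtain ya' where a': "a' = (x,ya')" using f a by (cases a') auto
  obtain x'' y'' where a'': "a'' = (x'',y'')" by (cases a'')
  have yy: "ya \<noteq> ya'" using d a a' by auto
  show ?thesis
  proof (cases "x'' = x")
    case True
    have "A = {(x,ya),(x,ya'),(x,y'')}" using A a a' a'' True by simp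
    from R3row[OF v this Pb] show ?thesis ..
  next
    case xx: False
    show ?thesis
    proof (cases "y'' = ya")
      case True
      have "A = {(x,ya),(x,ya'),(x'',ya)}" using A a a' a'' True by simp
      from RL[OF v this Pb xx] yy show ?thesis by auto
    next
      case y1: False
      show ?thesis
      proof (cases "y'' = ya'")
        case True
        have "A = {(x,ya'),(x,ya),(x'',ya')}" using A a a' a'' True by auto
        from RL[OF v this Pb xx] yy show ?thesis by auto
      next
        case y2: False
        have "A = {(x,ya),(x,ya'),(x'',y'')}" using A a a' a'' by simp
        from R2row[OF v this Pb xx y1 y2] show ?thesis ..
      qed
    qed
  qed
qed

lemma A3_casesY:
  assumes v: "vd P A" and A: "A = {a,a',a''}" and d: "a \<noteq> a'"
    and Pb: "P = insert b A" and f: "snd a = snd a'" "fst a'' \<noteq> fst a" "fst a'' \<noteq> fst a'"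
  shows False
proof -
  obtain xa y where a: "a = (xa,y)" by (cases a)
  obtain xa' where a': "a' = (xa',y)" using f a by (cases a') auto
  obtain x'' y'' where a'': "a'' = (x'',y'')" by (cases a'')
  show ?thesis
  proof (cases "y'' = y")
    case True
    have "A = {(xa,y),(xa',y),(x'',y)}" using A a a' a'' True by simp
    from R3col[OF v this Pb] show ?thesis .
  next
    case False
    have "A = {(xa,y),(xa',y),(x'',y'')}" using A a a' a'' by simp
    from R2col[OF v this Pb False] f a a' a'' show ?thesis by auto
  qed
qed

lemma L3G:
  assumes v: "vd P A" and c: "card P + card A \<le> 7"
  shows "(\<exists>u. universal VG EG u) \<or> (triangle_centered VG EG \<and> triangle_centered VH EH)"
proof (cases "A = {}")
  case True
  hence "P = VG \<times> VH" using A_empty v by blast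
  hence "card VG * card VH \<le> 7" using c by (simp add: card_cartesian_product)
  from nm_bound[OF cardG2 cardH2 this] have "card VG \<le> 3" by linarith
  thus ?thesis using Gs.card3_univ[OF neG] by blast
next
  case False
  have A1: "1 \<le> card A" using False vfinA[OF v] by (simp add: Suc_le_eq card_gt_0_iff)
  have P3: "3 \<le> card P" using P_ge3[OF v] .
  have AP: "card A \<le> card P" using card_le_P[OF v vAP[OF v]] .
  have "card A = 1 \<or> card A = 2 \<or> card A = 3" using c A1 P3 AP by linarith
  moreover {
    assume "card A = 1"
    then obtain a where "A = {a}" by (auto simp: card_1_singleton_iff)
    moreover obtain x y where "a = (x,y)" by (cases a)
    ultimately have Aeq: "A = {(x,y)}" by simp
    have x: "x \<in> VG" using vAP[OF v] vPV[OF v] Aeq by auto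
    have ?thesis
    proof (cases "universal VG EG x")
      case True thus ?thesis by blast
    next
      case False
      then obtain g0 where g0: "g0 \<in> VG" "g0 \<noteq> x" "\<not> EG x g0" using x unfolding universal_def by blast
      from cross2[OF v Aeq g0] have "2 * card VH + card VG \<le> card P + 1" .
      hence "card VG \<le> 3" using c A1 cardH2 by linarith
      thus ?thesis using Gs.card3_univ[OF neG] by blast
    qed
  } moreover {
    assume cA: "card A = 2"
    hence cP: "card P \<le> 5" using c by simp
    obtain a1 a2 where aa: "A = {a1,a2}" "a1 \<noteq> a2" using cA by (meson card_2_iff)
    obtain x1 y1 where a1: "a1 = (x1,y1)" by (cases a1)
    obtain x2 y2 where a2: "a2 = (x2,y2)" by (cases a2)
    have m: "x1 \<in> VG" "x2 \<in> VG" "y1 \<in> VH" "y2 \<in> VH" using vAP[OF v] vPV[OF v] aa a1 a2 by auto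
    have ?thesis
    proof (cases "x1 = x2")
      case True
      have all: "\<forall>a\<in>A. fst a = x1" using aa a1 a2 True by auto
      note r = row_lemma[OF v m(1) all]
      have "universal VG EG x1" using r(2) cP cardH2 by linarith
      thus ?thesis by blast
    next
      case x12: False
      show ?thesis
      proof (cases "y1 = y2")
        case True
        have all: "\<forall>a\<in>A. snd a = y1" using aa a1 a2 True by auto
        note r = col_lemma[OF v m(3) all]
        have "card VG \<le> 3" using r(1) cP by linarith
        thus ?thesis using Gs.card3_univ[OF neG] by blast
      next
        case y12: False
        have Aeq: "A = {(x1,y1),(x2,y2)}" using aa a1 a2 by simp
        note q = Qsub[OF v Aeq x12 y12]
        let ?Q = "{(x1,y1),(x2,y2),(x1,y2),(x2,y1)}"
        have e: "EG x1 x2"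
        proof (rule ccontr)
          assume ne: "\<not> EG x1 x2"
          obtain g1 h1 g2 h2 where ee: "(g1,h1) \<in> P" "(g2,h2) \<in> P" "EG x1 g1" "EG x1 g2" "h1 \<noteq> h2"
            using row_trick[OF v m(1)] by blast
          have "g1 \<noteq> x1" "g2 \<noteq> x1" "g1 \<noteq> x2" "g2 \<noteq> x2" using ee ne by auto
          hence n: "(g1,h1) \<notin> ?Q" "(g2,h2) \<notin> insert (g1,h1) ?Q" using ee by auto
          have "card (insert (g2,h2) (insert (g1,h1) ?Q)) = card ?Q + 2"
            using n by (intro card2ins) auto
          moreover have "insert (g2,h2) (insert (g1,h1) ?Q) \<subseteq> P" using q(1) ee by auto
          hence "card (insert (g2,h2) (insert (g1,h1) ?Q)) \<le> card P" by (rule card_le_P[OF v])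
          ultimately show False using q(2) cP by linarith
        qed
        show ?thesis
        proof (rule ccontr)
          assume nu: "\<not> ?thesis"
          hence "\<not> universal VG EG x1" "\<not> universal VG EG x2" by auto
          then obtain g0 g1 where g0: "g0 \<in> VG" "g0 \<noteq> x1" "\<not> EG x1 g0"
            and g1: "g1 \<in> VG" "g1 \<noteq> x2" "\<not> EG x2 g1" using m unfolding universal_def by blast
          have g0x2: "g0 \<noteq> x2" using g0 e by auto
          have g1x1: "g1 \<noteq> x1" using g1 e symG[of x1 x2] by auto
          have p0: "(g0,y2) \<in> P"
          proof (rule vin[OF v g0(1) m(4)])
            fix p q assume "(p,q) \<in> A" "EG g0 p" "EH y2 q"
            hence "EG g0 x1" using Aeq by auto
            thus False using g0 symG[of g0 x1] by blast
          qed
          have p1: "(g1,y1) \<in> P"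
          proof (rule vin[OF v g1(1) m(3)])
            fix p q assume "(p,q) \<in> A" "EG g1 p" "EH y1 q"
            hence "EG g1 x2" using Aeq by auto
            thus False using g1 symG[of g1 x2] by blast
          qed
          have n: "(g0,y2) \<notin> ?Q" "(g1,y1) \<notin> insert (g0,y2) ?Q" using g0 g1 g0x2 g1x1 y12 by auto
          have "card (insert (g1,y1) (insert (g0,y2) ?Q)) = card ?Q + 2"
            using n by (intro card2ins) auto
          moreover have "insert (g1,y1) (insert (g0,y2) ?Q) \<subseteq> P" using q(1) p0 p1 by auto
          hence "card (insert (g1,y1) (insert (g0,y2) ?Q)) \<le> card P" by (rule card_le_P[OF v])
          ultimately show False using q(2) cP by linarith
        qed
      qed
    qed
  } moreover {
    assume cA: "card A = 3"
    hence cP: "card P \<le> 4" using c by simp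
    have ?thesis
    proof (cases "card P = 3")
      case True
      thus ?thesis using P3_TC[OF v] by simp
    next
      case False
      hence cP4: "card P = 4" using cP P3 by simp
      have fA: "finite A" using vfinA[OF v] .
      have "card (P - A) = 1" using card_Diff_subset[OF fA vAP[OF v]] cP4 cA by simp
      then obtain b where "P - A = {b}" by (auto simp: card_1_singleton_iff)
      hence Pb: "P = insert b A" and bA: "b \<notin> A" using vAP[OF v] by auto
      obtain a1 a2 a3 where A: "A = {a1,a2,a3}" and d: "a1 \<noteq> a2" "a2 \<noteq> a3" "a1 \<noteq> a3"
        using cA by (meson card_3_iff)
      have A2: "A = {a1,a3,a2}" and A3: "A = {a2,a3,a1}" using A by auto
      show ?thesis
      proof (cases "fst a1 = fst a2")
        case True thus ?thesis using A3_casesX[OF v A d(1) d(3) d(2) Pb] by blast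
      next
        case f12: False
        show ?thesis
        proof (cases "fst a1 = fst a3")
          case True
            have "a3 \<noteq> a2" using d by simp
            with True show ?thesis using A3_casesX[OF v A2 d(3) d(1)] Pb by blast
        next
          case f13: False
          show ?thesis
          proof (cases "fst a2 = fst a3")
            case True
            have "a2 \<noteq> a1" "a3 \<noteq> a1" using d by auto
            with True show ?thesis using A3_casesX[OF v A3 d(2)] Pb by blast
          next
            case f23: False
            show ?thesis
            proof (cases "snd a1 = snd a2")
              case True
              have "fst a3 \<noteq> fst a1" "fst a3 \<noteq> fst a2" using f13 f23 by auto
              from A3_casesY[OF v A d(1) Pb True this] show ?thesis ..
            next
              case s12: False
              show ?thesis
              proof (cases "snd a1 = snd a3")
                case True
                have "fst a2 \<noteq> fst a1" "fst a2 \<noteq> fst a3" using f12 f23 by auto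
                from A3_casesY[OF v A2 d(3) Pb True this] show ?thesis ..
              next
                case s13: False
                show ?thesis
                proof (cases "snd a2 = snd a3")
                  case True
                  have "fst a1 \<noteq> fst a2" "fst a1 \<noteq> fst a3" using f12 f13 by auto
                  from A3_casesY[OF v A3 d(2) Pb True this] show ?thesis ..
                next
                  case s23: False
                  obtain x1 y1 where a1: "a1 = (x1,y1)" by (cases a1)
                  obtain x2 y2 where a2: "a2 = (x2,y2)" by (cases a2)
                  obtain x3 y3 where a3: "a3 = (x3,y3)" by (cases a3)
                  have "A = {(x1,y1),(x2,y2),(x3,y3)}" using A a1 a2 a3 by simp
                  from RT[OF v this Pb] f12 f13 f23 s12 s13 s23 a1 a2 a3 show ?thesis by auto
                qed
              qed
            qed
          qed
        qed
      qed
    qed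
  }
  ultimately show ?thesis by blast
qed

end


lemma valid_swap:
  assumes v: "valid VG EG VH EH P A"
  shows "valid VH EH VG EG (prod.swap ` P) (prod.swap ` A)"
  unfolding valid_def
proof (intro conjI ballI impI)
  show "prod.swap ` A \<subseteq> prod.swap ` P" using v by (auto simp: valid_def)
  show "prod.swap ` P \<subseteq> VH \<times> VG" using v by (auto simp: valid_def)
next
  fix h g assume hg: "h \<in> VH" "g \<in> VG"
  then obtain x y where "(x,y) \<in> P" "EG g x" "EH h y" using v unfolding valid_def by blast
  hence "(y,x) \<in> prod.swap ` P" "EH h y" "EG g x" by (auto intro: rev_image_eqI[of "(x,y)"])
  thus "\<exists>x y. (x, y) \<in> prod.swap ` P \<and> EH h x \<and> EG g y" by blast
next
  fix h g assume hg: "h \<in> VH" "g \<in> VG" "(h,g) \<notin> prod.swap ` P"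
  hence "(g,h) \<notin> P" by (auto simp: image_iff)
  then obtain x y where "(x,y) \<in> A" "EG g x" "EH h y" using v hg unfolding valid_def by blast
  hence "(y,x) \<in> prod.swap ` A" "EH h y" "EG g x" by (auto intro: rev_image_eqI[of "(x,y)"])
  thus "\<exists>x y. (x, y) \<in> prod.swap ` A \<and> EH h x \<and> EG g y" by blast
qed

lemma card_swap: "card (prod.swap ` S) = card S"
proof (rule card_image)
  show "inj_on prod.swap S" unfolding inj_on_def
  proof (intro ballI impI)
    fix x y assume "prod.swap x = prod.swap y"
    hence "prod.swap (prod.swap x) = prod.swap (prod.swap y)" by simp
    thus "x = y" by simp
  qed
qed

context tg
begin

lemma gLB: "4 \<le> gam"
  using gam_ex LB4 by metis

lemma g5: "gam \<le> 5 \<Longrightarrow> card VG = 2 \<and> card VH = 2"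
  using gam_ex L1 by metis

lemma g6: "gam \<le> 6 \<Longrightarrow> C6"
  using gam_ex L2 by metis

lemma g7G: "gam \<le> 7 \<Longrightarrow> (\<exists>u. universal VG EG u) \<or> (triangle_centered VG EG \<and> triangle_centered VH EH)"
  using gam_ex L3G by metis

lemma g7H: "gam \<le> 7 \<Longrightarrow> (\<exists>u. universal VH EH u) \<or> (triangle_centered VG EG \<and> triangle_centered VH EH)"
proof -
  assume c: "gam \<le> 7"
  obtain P A where v: "vd P A" and e: "gam = card P + card A" using gam_ex by blast
  interpret sw: tg VH EH VG EG using sG nG sH nH neG neH by unfold_locales
  have "valid VH EH VG EG (prod.swap ` P) (prod.swap ` A)" using valid_swap[OF v] .
  moreover have "card (prod.swap ` P) + card (prod.swap ` A) \<le> 7" using c e by (simp add: card_swap)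
  ultimately have "(\<exists>u. universal VH EH u) \<or> (triangle_centered VH EH \<and> triangle_centered VG EG)"
    by (rule sw.L3G)
  thus ?thesis by blast
qed

end


theorem theorem3p1:
  fixes VG :: "'a set" and EG :: "'a \<Rightarrow> 'a \<Rightarrow> bool"
    and VH :: "'b set" and EH :: "'b \<Rightarrow> 'b \<Rightarrow> bool"
  assumes G: "simple_graph VG EG" "no_isolated VG EG"
      and H: "simple_graph VH EH" "no_isolated VH EH"
  defines "\<gamma> \<equiv> gamma_tR (VG \<times> VH) (dprod_edges EG EH)"
  shows "\<gamma> \<notin> {1, 2, 3, 5}
    \<and> (\<gamma> = 4 \<longleftrightarrow> is_K2 VG EG \<and> is_K2 VH EH)
    \<and> (\<gamma> = 6 \<longleftrightarrow>
           (2 \<le> num_universal VG EG \<and> 2 \<le> num_universal VH EH \<and> (3 \<le> card VG \<or> 3 \<le> card VH))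
         \<or> (is_K2 VG EG \<and> 3 \<le> card VH \<and> 1 \<le> num_universal VH EH)
         \<or> (is_K2 VH EH \<and> 3 \<le> card VG \<and> 1 \<le> num_universal VG EG)
         \<or> (triangle_centered VG EG \<and> triangle_centered VH EH))
    \<and> (\<gamma> = 7 \<longleftrightarrow>
           1 \<le> num_universal VG EG \<and> 1 \<le> num_universal VH EH
         \<and> ((num_universal VG EG = 1 \<and> \<not> is_K2 VH EH) \<or> (num_universal VH EH = 1 \<and> \<not> is_K2 VG EG))
         \<and> \<not> (triangle_centered VG EG \<and> triangle_centered VH EH))
    \<and> (\<not> (1 \<le> num_universal VG EG \<and> 1 \<le> num_universal VH EH)
         \<and> gamma_t VG EG = 2 \<and> gamma_t VH EH = 2
         \<and> \<not> (triangle_centered VG EG \<and> triangle_centered VH EH)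
         \<longrightarrow> \<gamma> = 8)"
proof (cases "VG = {} \<or> VH = {}")
  case True
  hence e: "VG \<times> VH = {}" by auto
  have "{sum f (VG \<times> VH) |f. is_trdf (VG \<times> VH) (dprod_edges EG EH) f} = {0}"
    unfolding e by (auto simp: is_trdf_def)
  hence g0: "\<gamma> = 0" unfolding \<gamma>_def gamma_tR_def by simp
  show ?thesis
  proof (cases "VG = {}")
    case True
    thus ?thesis using g0 by (simp add: empty_facts)
  next
    case False
    hence "VH = {}" using \<open>VG = {} \<or> VH = {}\<close> by simp
    thus ?thesis using g0 by (simp add: empty_facts)
  qed
next
  case False
  interpret T: tg VG EG VH EH using G H False by unfold_locales auto
  let ?n = "card VG" and ?m = "card VH"
  have LB: "4 \<le> \<gamma>" unfolding \<gamma>_def by (rule T.gLB)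
  have F5: "\<gamma> \<le> 5 \<Longrightarrow> ?n = 2 \<and> ?m = 2" unfolding \<gamma>_def by (rule T.g5)
  have F6: "\<gamma> \<le> 6 \<Longrightarrow> T.C6" unfolding \<gamma>_def by (rule T.g6)
  have F7: "\<gamma> \<le> 7 \<Longrightarrow> ((\<exists>u. universal VG EG u) \<and> (\<exists>u. universal VH EH u))
      \<or> (triangle_centered VG EG \<and> triangle_centered VH EH)"
    unfolding \<gamma>_def using T.g7G T.g7H by blast
  have U4: "?n = 2 \<Longrightarrow> ?m = 2 \<Longrightarrow> \<gamma> \<le> 4" unfolding \<gamma>_def by (rule T.U4)
  have U6a: "\<gamma> \<le> 6" if ua: "2 \<le> num_universal VG EG" "2 \<le> num_universal VH EH"
  proof -
    obtain u1 u2 where "u1 \<noteq> u2" "universal VG EG u1" "universal VG EG u2" using ua(1) T.Gs.nu2 by blast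
    moreover obtain v1 v2 where "v1 \<noteq> v2" "universal VH EH v1" "universal VH EH v2" using ua(2) T.Hs.nu2 by blast
    ultimately show ?thesis unfolding \<gamma>_def using T.U6a by blast
  qed
  have U6b: "\<gamma> \<le> 6" if "?n = 2" "1 \<le> num_universal VH EH"
    using that T.Hs.nu1 T.U6b unfolding \<gamma>_def by blast
  have U6b': "\<gamma> \<le> 6" if "?m = 2" "1 \<le> num_universal VG EG"
    using that T.Gs.nu1 T.U6b' unfolding \<gamma>_def by blast
  have U6c: "\<gamma> \<le> 6" if "triangle_centered VG EG" "triangle_centered VH EH"
    using that T.U6c unfolding \<gamma>_def by blast
  have U7: "\<gamma> \<le> 7" if "1 \<le> num_universal VG EG" "1 \<le> num_universal VH EH"
    using that T.Gs.nu1 T.Hs.nu1 T.U7 unfolding \<gamma>_def by blast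
  have U8: "\<gamma> \<le> 8" if "gamma_t VG EG = 2" "gamma_t VH EH = 2"
    using that T.U8 unfolding \<gamma>_def by blast
  have K2G: "is_K2 VG EG \<longleftrightarrow> ?n = 2" by (rule T.Gs.K2_iff)
  have K2H: "is_K2 VH EH \<longleftrightarrow> ?m = 2" by (rule T.Hs.K2_iff)
  have n2: "2 \<le> ?n" "2 \<le> ?m" using T.cardG2 T.cardH2 .
  have nuG2: "?n = 2 \<Longrightarrow> num_universal VG EG = 2" by (rule T.Gs.card2_nu)
  have nuH2: "?m = 2 \<Longrightarrow> num_universal VH EH = 2" by (rule T.Hs.card2_nu)
  have TCG: "triangle_centered VG EG \<Longrightarrow> 3 \<le> ?n" by (rule T.Gs.TC_card)
  have TCH: "triangle_centered VH EH \<Longrightarrow> 3 \<le> ?m" by (rule T.Hs.TC_card)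
  have nu1G: "1 \<le> num_universal VG EG \<longleftrightarrow> (\<exists>u. universal VG EG u)" by (rule T.Gs.nu1)
  have nu1H: "1 \<le> num_universal VH EH \<longleftrightarrow> (\<exists>u. universal VH EH u)" by (rule T.Hs.nu1)
  have nu2G: "2 \<le> num_universal VG EG \<longleftrightarrow> (\<exists>u1 u2. u1 \<noteq> u2 \<and> universal VG EG u1 \<and> universal VG EG u2)"
    by (rule T.Gs.nu2)
  have nu2H: "2 \<le> num_universal VH EH \<longleftrightarrow> (\<exists>u1 u2. u1 \<noteq> u2 \<and> universal VH EH u1 \<and> universal VH EH u2)"
    by (rule T.Hs.nu2)

  define S6 where "S6 \<longleftrightarrow>
           (2 \<le> num_universal VG EG \<and> 2 \<le> num_universal VH EH \<and> (3 \<le> card VG \<or> 3 \<le> card VH))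
         \<or> (is_K2 VG EG \<and> 3 \<le> card VH \<and> 1 \<le> num_universal VH EH)
         \<or> (is_K2 VH EH \<and> 3 \<le> card VG \<and> 1 \<le> num_universal VG EG)
         \<or> (triangle_centered VG EG \<and> triangle_centered VH EH)"
  have S6up: "S6 \<Longrightarrow> \<gamma> \<le> 6"
    unfolding S6_def using U6a U6b U6b' U6c K2G K2H by blast
  have S6n22: "S6 \<Longrightarrow> \<not> (?n = 2 \<and> ?m = 2)"
    unfolding S6_def using TCG by auto
  have C6S6: "T.C6 \<Longrightarrow> (?n = 2 \<and> ?m = 2) \<or> S6"
    unfolding S6_def T.C6_def using K2G K2H nu1G nu1H nu2G nu2H by blast

  have P1: "\<gamma> \<notin> {1, 2, 3, 5}"
  proof
    assume "\<gamma> \<in> {1, 2, 3, 5}"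
    hence "\<gamma> = 5" using LB by auto
    hence "?n = 2 \<and> ?m = 2" using F5 by simp
    hence "\<gamma> \<le> 4" using U4 by blast
    thus False using \<open>\<gamma> = 5\<close> by simp
  qed
  have P2: "\<gamma> = 4 \<longleftrightarrow> is_K2 VG EG \<and> is_K2 VH EH"
  proof
    assume "\<gamma> = 4" thus "is_K2 VG EG \<and> is_K2 VH EH" using F5 K2G K2H by simp
  next
    assume "is_K2 VG EG \<and> is_K2 VH EH"
    thus "\<gamma> = 4" using U4 K2G K2H LB by simp
  qed
  have P3: "\<gamma> = 6 \<longleftrightarrow> S6"
  proof
    assume g6: "\<gamma> = 6"
    hence "(?n = 2 \<and> ?m = 2) \<or> S6" using F6 C6S6 by simp
    thus S6 using U4 g6 by auto
  next
    assume s: S6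
    have "\<gamma> \<le> 6" using S6up[OF s] .
    moreover have "\<not> \<gamma> \<le> 5" using F5 S6n22[OF s] by blast
    ultimately show "\<gamma> = 6" by simp
  qed
  define S7 where "S7 \<longleftrightarrow>
           1 \<le> num_universal VG EG \<and> 1 \<le> num_universal VH EH
         \<and> ((num_universal VG EG = 1 \<and> \<not> is_K2 VH EH) \<or> (num_universal VH EH = 1 \<and> \<not> is_K2 VG EG))
         \<and> \<not> (triangle_centered VG EG \<and> triangle_centered VH EH)"
  have P4: "\<gamma> = 7 \<longleftrightarrow> S7"
  proof
    assume g7: "\<gamma> = 7"
    have n6: "\<not> \<gamma> \<le> 6" using g7 by simp
    have "(\<exists>u. universal VG EG u) \<and> (\<exists>u. universal VH EH u)"
      using F7 g7 U6c n6 by auto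
    hence u: "1 \<le> num_universal VG EG" "1 \<le> num_universal VH EH" using nu1G nu1H by auto
    have ntc: "\<not> (triangle_centered VG EG \<and> triangle_centered VH EH)" using U6c n6 by blast
    have "(num_universal VG EG = 1 \<and> \<not> is_K2 VH EH) \<or> (num_universal VH EH = 1 \<and> \<not> is_K2 VG EG)"
    proof (rule ccontr)
      assume na: "\<not> ?thesis"
      show False
      proof (cases "2 \<le> num_universal VG EG \<and> 2 \<le> num_universal VH EH")
        case True
        thus False using U6a n6 by blast
      next
        case False
        hence "num_universal VG EG = 1 \<or> num_universal VH EH = 1" using u by linarith
        thus False
        proof
          assume a: "num_universal VG EG = 1"
          hence "?m = 2" using na K2H by blast
          moreover have "?n \<noteq> 2" using a nuG2 by auto
          ultimately show False using U6b' u n6 by blast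
        next
          assume a: "num_universal VH EH = 1"
          hence "?n = 2" using na K2G by blast
          moreover have "?m \<noteq> 2" using a nuH2 by auto
          ultimately show False using U6b u n6 by blast
        qed
      qed
    qed
    thus S7 unfolding S7_def using u ntc by blast
  next
    assume s: S7
    hence u: "1 \<le> num_universal VG EG" "1 \<le> num_universal VH EH"
      and o: "(num_universal VG EG = 1 \<and> \<not> is_K2 VH EH) \<or> (num_universal VH EH = 1 \<and> \<not> is_K2 VG EG)"
      and ntc: "\<not> (triangle_centered VG EG \<and> triangle_centered VH EH)" unfolding S7_def by auto
    have le7: "\<gamma> \<le> 7" using U7 u .
    have "\<not> \<gamma> \<le> 6"
    proof
      assume "\<gamma> \<le> 6"
      hence "(?n = 2 \<and> ?m = 2) \<or> S6" using F6 C6S6 by blast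
      thus False
      proof
        assume "?n = 2 \<and> ?m = 2"
        thus False using o nuG2 nuH2 by auto
      next
        assume S6
        thus False unfolding S6_def
        proof (elim disjE)
          assume "2 \<le> num_universal VG EG \<and> 2 \<le> num_universal VH EH \<and> (3 \<le> ?n \<or> 3 \<le> ?m)"
          thus False using o by auto
        next
          assume "is_K2 VG EG \<and> 3 \<le> ?m \<and> 1 \<le> num_universal VH EH"
          thus False using o K2G nuG2 by auto
        next
          assume "is_K2 VH EH \<and> 3 \<le> ?n \<and> 1 \<le> num_universal VG EG"
          thus False using o K2H nuH2 by auto
        next
          assume "triangle_centered VG EG \<and> triangle_centered VH EH"
          thus False using ntc by blast
        qed
      qed
    qed
    thus "\<gamma> = 7" using le7 by simp
  qed
  have P5: "\<not> (1 \<le> num_universal VG EG \<and> 1 \<le> num_universal VH EH)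
         \<and> gamma_t VG EG = 2 \<and> gamma_t VH EH = 2
         \<and> \<not> (triangle_centered VG EG \<and> triangle_centered VH EH)
         \<longrightarrow> \<gamma> = 8"
  proof
    assume h: "\<not> (1 \<le> num_universal VG EG \<and> 1 \<le> num_universal VH EH)
         \<and> gamma_t VG EG = 2 \<and> gamma_t VH EH = 2
         \<and> \<not> (triangle_centered VG EG \<and> triangle_centered VH EH)"
    have "\<gamma> \<le> 8" using U8 h by blast
    moreover have "\<not> \<gamma> \<le> 7"
    proof
      assume "\<gamma> \<le> 7"
      from F7[OF this] show False using h nu1G nu1H by blast
    qed
    ultimately show "\<gamma> = 8" by simp
  qed
  show ?thesis using P1 P2 P3 P4 P5 unfolding S6_def S7_def by blast
qed


end
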